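(* Let $n\ge2$. Let $u:\mathbb R\times(0,\infty)\to\mathbb R$ be twice continuously differentiable in $x$ and continuously differentiable in $t$, with $\partial_tu-\partial_x^2u=0$ on $\mathbb R\times(0,\infty)$. Suppose $u(\cdot,t)\in\mathcal A_c^n$ for each $t>0$, $\|u(\cdot,t)\|^{(n)}$ is bounded for $t\in(0,\infty)$, and $\lim_{t\to0^+}\|u(\cdot,t)-f\|^{(n)}=0$ for some $f\in\mathcal A_c^n$. Then $u(x,t)=f\ast\Theta_t(x)$ for all $(x,t)\in\mathbb R\times(0,\infty)$; i.e., $f\ast\Theta_t$ is the unique solution with these properties.
   Context: Let $\mathcal B_c$ be the set of continuous $F:\mathbb R\to\mathbb R$ such that $\lim_{x\to\pm\infty}F(x)$ exist as real numbers and $\lim_{x\to-\infty}F(x)=0$. $\mathcal A_c$ is the set of distributions $F'$ with $F\in\mathcal B_c$, with integral $\int_a^bF'=F(b)-F(a)$ and, for $g$ of bounded variation, $\int_{-\infty}^\infty F'g:=F(\infty)g(\infty)-\int F\,dg$ (Henstock–Stieltjes). For $n\in\mathbb N$, $\mathcal A_c^n$ is the set of distributions $f=F^{(n)}$ (distributional derivative) for some $F\in\mathcal B_c$; this $F$ is unique, and $\|f\|^{(n)}:=\sup_{x<y}|F(x)-F(y)|$. For $f\in\mathcal A_c^n$ with primitive $F$, $f\ast\Theta_t(x):=\int_{-\infty}^\infty F'(\xi)\Theta_t^{(n-1)}(x-\xi)\,d\xi$ (integral in $\mathcal A_c$), where $\Theta_t(x)=(4\pi t)^{-1/2}e^{-x^2/(4t)}$,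 $t>0$, and $\Theta_t^{(k)}$ is its $k$th $x$-derivative. *)

theory Defs
  imports "HOL-Analysis.Analysis"
begin

definition Bc :: "(real \<Rightarrow> real) \<Rightarrow> bool" where
  "Bc F \<longleftrightarrow> continuous_on UNIV F \<and> (F \<longlongrightarrow> 0) at_bot \<and> (\<exists>L. (F \<longlongrightarrow> L) at_top)"

definition test_fun :: "(real \<Rightarrow> real) \<Rightarrow> bool" where
  "test_fun \<phi> \<longleftrightarrow> (\<forall>k x. ((deriv ^^ k) \<phi>) differentiable (at x)) \<and>
                   (\<exists>a b. \<forall>x. x \<notin> {a..b} \<longrightarrow> \<phi> x = 0)"

definition distr_deriv :: "nat \<Rightarrow> (real \<Rightarrow> real) \<Rightarrow> (real \<Rightarrow> real) \<Rightarrow> bool" where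
  "distr_deriv n F g \<longleftrightarrow> (\<forall>\<phi>. test_fun \<phi> \<longrightarrow>
      integral UNIV (\<lambda>x. g x * \<phi> x) = (-1) ^ n * integral UNIV (\<lambda>x. F x * (deriv ^^ n) \<phi> x))"

text \<open>The norm of f = F^(n) in A_c^n, expressed through its (unique) primitive F in B_c.\<close>
definition Acn_norm :: "(real \<Rightarrow> real) \<Rightarrow> real" where
  "Acn_norm F = (SUP p \<in> {p :: real \<times> real. fst p < snd p}. \<bar>F (fst p) - F (snd p)\<bar>)"

definition heat_kernel :: "real \<Rightarrow> real \<Rightarrow> real" where
  "heat_kernel t x = exp (- (x ^ 2) / (4 * t)) / sqrt (4 * pi * t)"

text \<open>f * Theta_t (x) for f = F^(n), F in B_c:
  the A_c integral of F' against g(xi) = Theta_t^(n-1)(x - xi), i.e.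
  F(infinity) g(infinity) - int F dg, with the Stieltjes integral against the smooth g
  written as int F(xi) g'(xi) d xi.\<close>
definition heat_conv :: "nat \<Rightarrow> (real \<Rightarrow> real) \<Rightarrow> real \<Rightarrow> real \<Rightarrow> real" where
  "heat_conv n F t x =
     (let g = (\<lambda>\<xi>. (deriv ^^ (n - 1)) (heat_kernel t) (x - \<xi>))
      in Lim at_top F * Lim at_top g - integral UNIV (\<lambda>\<xi>. F \<xi> * deriv g \<xi>))"

end

theory Submission
  imports Defs "HOL-Computational_Algebra.Polynomial" "HOL-Probability.Distributions" "HOL-Real_Asymp.Real_Asymp"
begin


definition dseq :: "(real \<Rightarrow> real) \<Rightarrow> (nat \<Rightarrow> real \<Rightarrow> real) \<Rightarrow> bool" where
  "dseq f F \<longleftrightarrow> F 0 = f \<and> (\<forall>k x. (F k has_real_derivative F (Suc k) x) (at x))"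

lemma dseqD0: "dseq f F \<Longrightarrow> F 0 = f" by (simp add: dseq_def)
lemma dseqD: "dseq f F \<Longrightarrow> (F k has_real_derivative F (Suc k) x) (at x)" by (simp add: dseq_def)

lemma dseq_deriv: assumes "dseq f F" shows "(deriv ^^ k) f = F k"
proof (induction k)
  case 0 then show ?case using assms by (simp add: dseq_def)
next
  case (Suc k)
  show ?case using Suc assms by (auto intro!: ext DERIV_imp_deriv simp: dseq_def)
qed

lemma dseq_unique: "dseq f F \<Longrightarrow> dseq f G \<Longrightarrow> F = G"
  by (metis dseq_deriv ext)

lemma dseq_isCont: "dseq f F \<Longrightarrow> isCont (F k) x"
  using dseqD DERIV_isCont by blast

lemma dseq_cont: "dseq f F \<Longrightarrow> continuous_on S (F k)"
  by (simp add: continuous_at_imp_continuous_on dseq_isCont)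

lemma dseq_shift: "dseq f F \<Longrightarrow> dseq (F m) (\<lambda>k. F (m + k))"
  by (simp add: dseq_def)

lemma dseq_test:
  assumes "dseq f F" "\<And>x. x \<notin> {a..b} \<Longrightarrow> f x = 0"
  shows "test_fun f"
  unfolding test_fun_def
proof safe
  fix k x show "(deriv ^^ k) f differentiable at x"
    using dseq_deriv[OF assms(1)] dseqD[OF assms(1)] real_differentiable_def by metis
next
  show "\<exists>a b. \<forall>x. x \<notin> {a..b} \<longrightarrow> f x = 0" using assms(2) by blast
qed

lemma dseq_const: "dseq (\<lambda>x. c) (\<lambda>k x. if k = 0 then c else 0)"
  by (auto simp: dseq_def intro!: derivative_eq_intros)

lemma dseq_add: "dseq f F \<Longrightarrow> dseq g G \<Longrightarrow> dseq (\<lambda>x. f x + g x) (\<lambda>k x. F k x + G k x)"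
  by (auto simp: dseq_def intro!: derivative_eq_intros)

lemma dseq_diff: "dseq f F \<Longrightarrow> dseq g G \<Longrightarrow> dseq (\<lambda>x. f x - g x) (\<lambda>k x. F k x - G k x)"
  by (auto simp: dseq_def intro!: derivative_eq_intros)

lemma dseq_cmult: "dseq f F \<Longrightarrow> dseq (\<lambda>x. c * f x) (\<lambda>k x. c * F k x)"
  by (auto simp: dseq_def intro!: derivative_eq_intros)

lemma dseq_affine:
  assumes "dseq f F"
  shows "dseq (\<lambda>x. f (a * x + b)) (\<lambda>k x. a ^ k * F k (a * x + b))"
  unfolding dseq_def
proof safe
  show "(\<lambda>x. a ^ 0 * F 0 (a * x + b)) = (\<lambda>x. f (a * x + b))" using assms by (simp add: dseq_def)
next
  fix k x
  have "((\<lambda>x. F k (a * x + b)) has_real_derivative F (Suc k) (a * x + b) * a) (at x)"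
    by (rule DERIV_chain2[OF dseqD[OF assms]]) (auto intro!: derivative_eq_intros)
  then show "((\<lambda>x. a ^ k * F k (a * x + b)) has_real_derivative a ^ Suc k * F (Suc k) (a * x + b)) (at x)"
    by (auto intro!: derivative_eq_intros simp: algebra_simps)
qed

lemma leibniz_sum_eq:
  fixes F G :: "nat \<Rightarrow> real"
  shows "(\<Sum>i = 0..n. real (n choose i) * (F (Suc i) * G (n - i) + F i * G (Suc (n - i)))) =
         (\<Sum>i = 0..Suc n. real (Suc n choose i) * F i * G (Suc n - i))"
proof -
  have A: "(\<Sum>i = 0..Suc n. real (Suc n choose i) * F i * G (Suc n - i)) =
      F 0 * G (Suc n) + (\<Sum>i = 0..n. real (Suc n choose Suc i) * F (Suc i) * G (n - i))"
    by (subst sum.atLeast0_atMost_Suc_shift) simp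
  have B: "(\<Sum>i = 0..n. real (Suc n choose Suc i) * F (Suc i) * G (n - i)) =
      (\<Sum>i = 0..n. real (n choose i) * F (Suc i) * G (n - i)) +
      (\<Sum>i = 0..n. real (n choose Suc i) * F (Suc i) * G (n - i))"
    by (simp add: sum.distrib[symmetric] algebra_simps)
  have C: "F 0 * G (Suc n) + (\<Sum>i = 0..n. real (n choose Suc i) * F (Suc i) * G (n - i)) =
      (\<Sum>i = 0..n. real (n choose i) * F i * G (Suc (n - i)))"
  proof -
    have "(\<Sum>i = 0..Suc n. real (n choose i) * F i * G (Suc n - i)) =
        F 0 * G (Suc n) + (\<Sum>i = 0..n. real (n choose Suc i) * F (Suc i) * G (n - i))"
      by (subst sum.atLeast0_atMost_Suc_shift) simp
    moreover have "(\<Sum>i = 0..Suc n. real (n choose i) * F i * G (Suc n - i)) =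
        (\<Sum>i = 0..n. real (n choose i) * F i * G (Suc n - i))"
      by (simp add: sum.atLeast0_atMost_Suc)
    moreover have "(\<Sum>i = 0..n. real (n choose i) * F i * G (Suc n - i)) =
        (\<Sum>i = 0..n. real (n choose i) * F i * G (Suc (n - i)))"
      by (intro sum.cong) (auto simp: Suc_diff_le)
    ultimately show ?thesis by simp
  qed
  show ?thesis unfolding A B using C
    by (simp add: sum.distrib algebra_simps)
qed

lemma dseq_mult:
  assumes f: "dseq f F" and g: "dseq g G"
  shows "dseq (\<lambda>x. f x * g x) (\<lambda>k x. \<Sum>i = 0..k. real (k choose i) * F i x * G (k - i) x)"
  unfolding dseq_def
proof safe
  show "(\<lambda>x. \<Sum>i = 0..0. real (0 choose i) * F i x * G (0 - i) x) = (\<lambda>x. f x * g x)"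
    using f g by (simp add: dseq_def)
next
  fix k x
  have "((\<lambda>x. \<Sum>i = 0..k. real (k choose i) * F i x * G (k - i) x) has_real_derivative
     (\<Sum>i = 0..k. real (k choose i) * (F (Suc i) x * G (k - i) x + F i x * G (Suc (k - i)) x))) (at x)"
    apply (rule DERIV_sum)
    using dseqD[OF f] dseqD[OF g]
    by (auto intro!: derivative_eq_intros simp: algebra_simps)
  then show "((\<lambda>x. \<Sum>i = 0..k. real (k choose i) * F i x * G (k - i) x) has_real_derivative
     (\<Sum>i = 0..Suc k. real (Suc k choose i) * F i x * G (Suc k - i) x)) (at x)"
    using leibniz_sum_eq[of k "\<lambda>i. F i x" "\<lambda>i. G i x"] by simp
qed


lemma poly_exp_tendsto: "((\<lambda>y::real. poly q y * exp (- y)) \<longlongrightarrow> 0) at_top"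
proof -
  have "((\<lambda>y::real. \<Sum>i\<le>degree q. coeff q i * (y ^ i / exp y)) \<longlongrightarrow> (\<Sum>i\<le>degree q. coeff q i * 0)) at_top"
    by (intro tendsto_intros tendsto_power_div_exp_0)
  moreover have "(\<Sum>i\<le>degree q. coeff q i * (y ^ i / exp y)) = poly q y * exp (- y)" for y
    by (simp add: poly_altdef sum_distrib_right exp_minus divide_inverse mult.assoc)
  ultimately show ?thesis by simp
qed

fun hp :: "nat \<Rightarrow> real poly" where
  "hp 0 = 1"
| "hp (Suc k) = [:0, 0, 1:] * (hp k - pderiv (hp k))"

definition HH :: "nat \<Rightarrow> real \<Rightarrow> real" where
  "HH k x = (if x > 0 then poly (hp k) (1 / x) * exp (- (1 / x)) else 0)"

lemma HH_deriv_pos: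
  assumes "x > 0"
  shows "(HH k has_real_derivative HH (Suc k) x) (at x)"
proof -
  have d1: "((\<lambda>y. poly (hp k) (1 / y)) has_real_derivative poly (pderiv (hp k)) (1 / x) * (- 1 / x ^ 2)) (at x)"
    by (rule DERIV_chain2[OF poly_DERIV]) (use assms in \<open>auto intro!: derivative_eq_intros simp: power2_eq_square\<close>)
  have d2: "((\<lambda>y. exp (- (1 / y))) has_real_derivative exp (- (1 / x)) * (1 / x ^ 2)) (at x)"
    using assms by (auto intro!: derivative_eq_intros simp: power2_eq_square)
  have d: "((\<lambda>y. poly (hp k) (1 / y) * exp (- (1 / y))) has_real_derivative
      poly (pderiv (hp k)) (1 / x) * (- 1 / x ^ 2) * exp (- (1 / x)) +
      exp (- (1 / x)) * (1 / x ^ 2) * poly (hp k) (1 / x)) (at x)"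
    by (rule DERIV_mult[OF d1 d2])
  have e: "poly (pderiv (hp k)) (1 / x) * (- 1 / x ^ 2) * exp (- (1 / x)) +
      exp (- (1 / x)) * (1 / x ^ 2) * poly (hp k) (1 / x) = HH (Suc k) x"
    using assms by (simp add: HH_def poly_mult algebra_simps power2_eq_square divide_simps)
  show ?thesis
    apply (rule has_field_derivative_transform_within_open[of "\<lambda>y. poly (hp k) (1 / y) * exp (- (1 / y))" _ _ "{0<..}"])
    using d e assms by (auto simp: HH_def)
qed

lemma HH_deriv_neg:
  assumes "x < 0"
  shows "(HH k has_real_derivative HH (Suc k) x) (at x)"
proof -
  have "((\<lambda>y. 0) has_real_derivative 0) (at x)" by simp
  then have "(HH k has_real_derivative 0) (at x)"
    apply (rule has_field_derivative_transform_within_open[of _ _ _ "{..<0}"])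
    using assms by (auto simp: HH_def)
  then show ?thesis using assms by (simp add: HH_def)
qed

lemma HH_deriv_0: "(HH k has_real_derivative HH (Suc k) 0) (at 0)"
proof -
  have "((\<lambda>y. (HH k y - HH k 0) / (y - 0)) \<longlongrightarrow> 0) (at (0::real))"
  proof (rule filterlim_split_at)
    have "eventually (\<lambda>y. 0 = (HH k y - HH k 0) / (y - 0)) (at_left (0::real))"
      unfolding eventually_at_left_field by (rule exI[of _ "-1"]) (auto simp: HH_def)
    then show "((\<lambda>y. (HH k y - HH k 0) / (y - 0)) \<longlongrightarrow> 0) (at_left 0)"
      by (rule Lim_transform_eventually[OF tendsto_const])
  next
    have lim: "((\<lambda>y. poly (hp k * [:0,1:]) y * exp (- y)) \<longlongrightarrow> 0) at_top"
      by (rule poly_exp_tendsto)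
    have "eventually (\<lambda>y. poly (hp k * [:0,1:]) y * exp (- y) = (HH k (inverse y) - HH k 0) / (inverse y - 0)) at_top"
      using eventually_gt_at_top[of 0]
      by eventually_elim (auto simp: HH_def poly_mult field_simps)
    then have "((\<lambda>y. (HH k (inverse y) - HH k 0) / (inverse y - 0)) \<longlongrightarrow> 0) at_top"
      by (rule Lim_transform_eventually[OF lim])
    then show "((\<lambda>y. (HH k y - HH k 0) / (y - 0)) \<longlongrightarrow> 0) (at_right 0)"
      by (simp add: filterlim_at_right_to_top)
  qed
  then show ?thesis
    by (simp add: has_field_derivative_iff HH_def)
qed

lemma dseq_HH: "dseq (HH 0) HH"
  unfolding dseq_def
proof safe
  fix k and x :: real
  show "(HH k has_real_derivative HH (Suc k) x) (at x)"
    using HH_deriv_pos HH_deriv_neg HH_deriv_0 by (cases "x > 0"; cases "x < 0") auto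
qed

lemma HH_zero: "x \<le> 0 \<Longrightarrow> HH k x = 0" by (simp add: HH_def)
lemma HH_0_pos: "x > 0 \<Longrightarrow> HH 0 x > 0" by (simp add: HH_def)

definition BB :: "nat \<Rightarrow> real \<Rightarrow> real" where
  "BB k x = (\<Sum>i = 0..k. real (k choose i) * HH i x * ((-1) ^ (k - i) * HH (k - i) (1 - x)))"

lemma dseq_BB: "dseq (\<lambda>x. HH 0 x * HH 0 (1 - x)) BB"
proof -
  have "dseq (\<lambda>x. HH 0 ((-1) * x + 1)) (\<lambda>k x. (-1) ^ k * HH k ((-1) * x + 1))"
    by (rule dseq_affine[OF dseq_HH])
  then have "dseq (\<lambda>x. HH 0 (1 - x)) (\<lambda>k x. (-1) ^ k * HH k (1 - x))" by simp
  from dseq_mult[OF dseq_HH this] show ?thesis unfolding BB_def by simp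
qed

lemma BB_zero: "x \<le> 0 \<or> x \<ge> 1 \<Longrightarrow> BB k x = 0"
  by (auto simp: BB_def HH_zero intro!: sum.neutral)

lemma BB0: "BB 0 x = HH 0 x * HH 0 (1 - x)"
  using dseqD0[OF dseq_BB] by metis

lemma BB_cont: "continuous_on S (BB k)"
  using dseq_cont[OF dseq_BB] .

definition cB :: real where "cB = integral {-1..1} (BB 0)"

lemma cB_pos: "cB > 0"
proof -
  have nn: "0 \<le> BB 0 x" for x
    by (simp add: BB0 HH_def)
  have int: "BB 0 integrable_on {-1..1}"
    by (intro integrable_continuous_interval BB_cont)
  have "cB \<ge> 0" unfolding cB_def using nn int by (simp add: integral_nonneg)
  moreover have "cB \<noteq> 0"
  proof
    assume "cB = 0"
    then have "(BB 0 has_integral 0) (cbox (-1) 1)"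
      using int unfolding cB_def by (simp add: has_integral_integral)
    then have "BB 0 (1/2) = 0"
      by (intro has_integral_0_cbox_imp_0[OF _ _ _ _, of "-1" 1 "BB 0"]) (auto intro: BB_cont nn)
    moreover have "BB 0 (1/2) > 0" by (simp add: BB0 HH_def)
    ultimately show False by simp
  qed
  ultimately show ?thesis by simp
qed

definition Sfun :: "real \<Rightarrow> real" where
  "Sfun x = integral {-1..x} (BB 0) / cB"

definition SS :: "nat \<Rightarrow> real \<Rightarrow> real" where
  "SS k x = (if k = 0 then Sfun x else BB (k - 1) x / cB)"

lemma Sfun_neg: "x \<le> 0 \<Longrightarrow> Sfun x = 0"
proof -
  assume x: "x \<le> 0"
  have "integral {-1..x} (BB 0) = integral {-1..x} (\<lambda>_. 0)"
    by (intro integral_cong) (use x in \<open>auto simp: BB_zero\<close>)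
  then show ?thesis by (simp add: Sfun_def)
qed

lemma Sfun_ge1: "x \<ge> 1 \<Longrightarrow> Sfun x = 1"
proof -
  assume x: "x \<ge> 1"
  have int: "BB 0 integrable_on {-1..x}"
    by (intro integrable_continuous_interval BB_cont)
  have "integral {-1..1} (BB 0) + integral {1..x} (BB 0) = integral {-1..x} (BB 0)"
    by (rule Henstock_Kurzweil_Integration.integral_combine) (use x int in auto)
  moreover have "integral {1..x} (BB 0) = integral {1..x} (\<lambda>_. 0)"
    by (intro integral_cong) (auto simp: BB_zero)
  ultimately show ?thesis using cB_pos by (simp add: Sfun_def cB_def)
qed

lemma Sfun_deriv: "(Sfun has_real_derivative BB 0 x / cB) (at x)"
proof (cases "x < 0")
  case True
  have "((\<lambda>y. 0) has_real_derivative 0) (at x)" by simp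
  then have "(Sfun has_real_derivative 0) (at x)"
    by (rule has_field_derivative_transform_within_open[of _ _ _ "{..<0}"]) (use True in \<open>auto simp: Sfun_neg\<close>)
  then show ?thesis using True by (simp add: BB_zero)
next
  case False
  have "((\<lambda>y. integral {-1..y} (BB 0)) has_real_derivative BB 0 x) (at x within {-1..x+1})"
    by (rule integral_has_real_derivative) (use False in \<open>auto intro: BB_cont\<close>)
  moreover have "at x within {-1..x+1} = at x"
    by (rule at_within_interior) (use False in auto)
  ultimately have "((\<lambda>y. integral {-1..y} (BB 0)) has_real_derivative BB 0 x) (at x)" by simp
  then show ?thesis unfolding Sfun_def using cB_pos by (auto intro!: derivative_eq_intros)
qed

lemma dseq_S: "dseq Sfun SS"
  unfolding dseq_def
proof safe
  show s0: "SS 0 = Sfun" by (simp add: SS_def fun_eq_iff)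
  fix k x
  show "(SS k has_real_derivative SS (Suc k) x) (at x)"
  proof (cases k)
    case 0
    have "SS (Suc 0) x = BB 0 x / cB" by (simp add: SS_def)
    then show ?thesis using Sfun_deriv[of x] s0 0 by simp
  next
    case (Suc m)
    have "((\<lambda>x. BB m x / cB) has_real_derivative BB (Suc m) x / cB) (at x)"
      using dseqD[OF dseq_BB] cB_pos by (auto intro!: derivative_eq_intros)
    moreover have "SS (Suc m) = (\<lambda>x. BB m x / cB)" "SS (Suc (Suc m)) x = BB (Suc m) x / cB"
      by (auto simp: SS_def fun_eq_iff)
    ultimately show ?thesis using Suc by simp
  qed
qed

lemma SS_const: "x \<le> 0 \<or> x \<ge> 1 \<Longrightarrow> k \<ge> 1 \<Longrightarrow> SS k x = 0"
  by (auto simp: SS_def BB_zero)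

lemma SS_le0: "x \<le> 0 \<Longrightarrow> SS k x = 0"
  by (auto simp: SS_def BB_zero Sfun_neg)

lemma SS_ge1: "x \<ge> 1 \<Longrightarrow> SS k x = (if k = 0 then 1 else 0)"
  by (auto simp: SS_def BB_zero Sfun_ge1)

lemma SS_bounded: "\<exists>B. \<forall>x. \<bar>SS k x\<bar> \<le> B"
proof -
  have "compact (SS k ` {0..1})"
    by (intro compact_continuous_image dseq_cont[OF dseq_S]) auto
  then obtain B where B: "\<forall>y\<in>SS k ` {0..1}. norm y \<le> B"
    using compact_imp_bounded bounded_iff by metis
  have "\<bar>SS k x\<bar> \<le> max B 1" for x
  proof (cases "x \<in> {0..1}")
    case True then show ?thesis using B by force
  next
    case False
    then have "x \<le> 0 \<or> x \<ge> 1" by auto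
    then show ?thesis using SS_le0 SS_ge1 by (smt (verit))
  qed
  then show ?thesis by blast
qed

definition SB :: "nat \<Rightarrow> real" where "SB k = (SOME B. \<forall>x. \<bar>SS k x\<bar> \<le> B)"

lemma SB: "\<bar>SS k x\<bar> \<le> SB k"
  using someI_ex[OF SS_bounded[of k]] unfolding SB_def by blast

definition cutoff :: "real \<Rightarrow> real \<Rightarrow> real \<Rightarrow> real" where
  "cutoff c R x = Sfun (x - c + R + 1) * Sfun (c + R + 1 - x)"

definition CC :: "real \<Rightarrow> real \<Rightarrow> nat \<Rightarrow> real \<Rightarrow> real" where
  "CC c R k x = (\<Sum>i = 0..k. real (k choose i) * SS i (x - c + R + 1) * ((-1) ^ (k - i) * SS (k - i) (c + R + 1 - x)))"

lemma dseq_cut: "dseq (cutoff c R) (CC c R)"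
proof -
  have a: "dseq (\<lambda>x. Sfun (1 * x + (R + 1 - c))) (\<lambda>k x. 1 ^ k * SS k (1 * x + (R + 1 - c)))"
    by (rule dseq_affine[OF dseq_S])
  have b: "dseq (\<lambda>x. Sfun ((-1) * x + (c + R + 1))) (\<lambda>k x. (-1) ^ k * SS k ((-1) * x + (c + R + 1)))"
    by (rule dseq_affine[OF dseq_S])
  from dseq_mult[OF a b] show ?thesis
    unfolding cutoff_def CC_def by (simp add: algebra_simps)
qed

lemma CC_inner: "\<bar>x - c\<bar> \<le> R \<Longrightarrow> CC c R k x = (if k = 0 then 1 else 0)"
proof -
  assume x: "\<bar>x - c\<bar> \<le> R"
  show ?thesis
  proof (cases "k = 0")
    case True then show ?thesis using x by (simp add: CC_def SS_ge1)
  next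
    case False
    have "CC c R k x = (\<Sum>i = 0..k. 0)"
      unfolding CC_def
    proof (intro sum.cong refl)
      fix i assume i: "i \<in> {0..k}"
      show "real (k choose i) * SS i (x - c + R + 1) * ((-1) ^ (k - i) * SS (k - i) (c + R + 1 - x)) = 0"
      proof (cases "i = 0")
        case True then show ?thesis using x False by (simp add: SS_ge1)
      next
        case False then show ?thesis using x by (simp add: SS_ge1)
      qed
    qed
    then show ?thesis using False by simp
  qed
qed

lemma CC_outer: "\<bar>x - c\<bar> \<ge> R + 1 \<Longrightarrow> CC c R k x = 0"
proof -
  assume x: "\<bar>x - c\<bar> \<ge> R + 1"
  then have "x - c + R + 1 \<le> 0 \<or> c + R + 1 - x \<le> 0" by linarith
  then show ?thesis unfolding CC_def by (auto intro!: sum.neutral simp: SS_le0)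
qed

definition CB :: "nat \<Rightarrow> real" where
  "CB k = (\<Sum>i = 0..k. real (k choose i) * SB i * SB (k - i))"

lemma CC_bound: "\<bar>CC c R k x\<bar> \<le> CB k"
proof -
  have "\<bar>CC c R k x\<bar> \<le> (\<Sum>i = 0..k. \<bar>real (k choose i) * SS i (x - c + R + 1) * ((-1) ^ (k - i) * SS (k - i) (c + R + 1 - x))\<bar>)"
    unfolding CC_def by (rule sum_abs)
  also have "\<dots> \<le> CB k" unfolding CB_def
  proof (intro sum_mono)
    fix i
    have "\<bar>real (k choose i) * SS i (x - c + R + 1) * ((-1) ^ (k - i) * SS (k - i) (c + R + 1 - x))\<bar>
        = real (k choose i) * \<bar>SS i (x - c + R + 1)\<bar> * \<bar>SS (k - i) (c + R + 1 - x)\<bar>"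
      by (simp add: abs_mult power_abs)
    also have "\<dots> \<le> real (k choose i) * SB i * SB (k - i)"
      by (intro mult_mono SB mult_nonneg_nonneg) (auto intro: order_trans[OF abs_ge_zero SB])
    finally show "\<bar>real (k choose i) * SS i (x - c + R + 1) * ((-1) ^ (k - i) * SS (k - i) (c + R + 1 - x))\<bar>
        \<le> real (k choose i) * SB i * SB (k - i)" .
  qed
  finally show ?thesis .
qed

lemma cut_eq: "cutoff c R = CC c R 0"
  using dseqD0[OF dseq_cut] by simp


lemma exp_ge_pow_fact:
  fixes w :: real assumes "w \<ge> 0"
  shows "w ^ i / fact i \<le> exp w"
proof -
  have s: "(\<lambda>n. w ^ n /\<^sub>R fact n) sums exp w" by (rule exp_converges)
  have "sum (\<lambda>n. w ^ n /\<^sub>R fact n) {i} \<le> suminf (\<lambda>n. w ^ n /\<^sub>R fact n)"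
    by (rule sum_le_suminf) (use s assms in \<open>auto simp: sums_iff\<close>)
  then show ?thesis using s by (simp add: sums_iff divide_inverse mult.commute)
qed

lemma pow_gauss_bound: "\<exists>C. \<forall>z::real. \<bar>z\<bar> ^ i * exp (- z\<^sup>2 / 8) \<le> C"
proof -
  have "\<bar>z\<bar> ^ i * exp (- z\<^sup>2 / 8) \<le> 1 + 8 ^ i * fact i" for z :: real
  proof -
    define w where "w = z\<^sup>2 / 8"
    have w0: "w \<ge> 0" by (simp add: w_def)
    have e: "exp (- z\<^sup>2 / 8) = inverse (exp w)" by (simp add: w_def exp_minus)
    have "\<bar>z\<bar> ^ i \<le> 1 + \<bar>z\<bar> ^ (2 * i)"
    proof (cases "\<bar>z\<bar> \<le> 1")
      case True then have "\<bar>z\<bar> ^ i \<le> 1" by (simp add: power_le_one)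
      then show ?thesis by (smt (verit) zero_le_power abs_ge_zero)
    next
      case False then have "\<bar>z\<bar> ^ i \<le> \<bar>z\<bar> ^ (2 * i)" by (intro power_increasing) auto
      then show ?thesis by simp
    qed
    also have "\<bar>z\<bar> ^ (2 * i) = (8 * w) ^ i"
      unfolding power_mult power2_abs w_def by simp
    also have "\<dots> = 8 ^ i * w ^ i" by (simp add: power_mult_distrib)
    finally have A: "\<bar>z\<bar> ^ i \<le> 1 + 8 ^ i * w ^ i" .
    have B: "w ^ i \<le> fact i * exp w" using exp_ge_pow_fact[OF w0, of i] by (simp add: divide_simps mult.commute)
    have "\<bar>z\<bar> ^ i * exp (- z\<^sup>2 / 8) \<le> (1 + 8 ^ i * w ^ i) * inverse (exp w)"
      unfolding e by (intro mult_right_mono A) auto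
    also have "\<dots> = inverse (exp w) + 8 ^ i * (w ^ i * inverse (exp w))" by (simp add: algebra_simps)
    also have "\<dots> \<le> 1 + 8 ^ i * fact i"
    proof (intro add_mono mult_left_mono)
      show "inverse (exp w) \<le> 1" using w0 by (simp add: inverse_le_1_iff)
      show "w ^ i * inverse (exp w) \<le> fact i" using B by (simp add: divide_simps)
    qed auto
    finally show ?thesis .
  qed
  then show ?thesis by blast
qed

lemma poly_gauss_bound: "\<exists>C. \<forall>z::real. \<bar>poly p z\<bar> * exp (- z\<^sup>2 / 8) \<le> C"
proof -
  have "\<forall>i. \<exists>C. \<forall>z::real. \<bar>z\<bar> ^ i * exp (- z\<^sup>2 / 8) \<le> C" using pow_gauss_bound by blast
  then obtain C where C: "\<And>i (z::real). \<bar>z\<bar> ^ i * exp (- z\<^sup>2 / 8) \<le> C i" by metis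
  have "\<bar>poly p z\<bar> * exp (- z\<^sup>2 / 8) \<le> (\<Sum>i\<le>degree p. \<bar>coeff p i\<bar> * C i)" for z
  proof -
    have "\<bar>poly p z\<bar> \<le> (\<Sum>i\<le>degree p. \<bar>coeff p i\<bar> * \<bar>z\<bar> ^ i)"
      unfolding poly_altdef by (rule order_trans[OF sum_abs]) (simp add: abs_mult power_abs)
    then have "\<bar>poly p z\<bar> * exp (- z\<^sup>2 / 8) \<le> (\<Sum>i\<le>degree p. \<bar>coeff p i\<bar> * \<bar>z\<bar> ^ i) * exp (- z\<^sup>2 / 8)"
      by (intro mult_right_mono) auto
    also have "\<dots> = (\<Sum>i\<le>degree p. \<bar>coeff p i\<bar> * (\<bar>z\<bar> ^ i * exp (- z\<^sup>2 / 8)))"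
      by (simp add: sum_distrib_right mult.assoc)
    also have "\<dots> \<le> (\<Sum>i\<le>degree p. \<bar>coeff p i\<bar> * C i)"
      by (intro sum_mono mult_left_mono C) auto
    finally show ?thesis .
  qed
  then show ?thesis by blast
qed

definition Eg :: "real \<Rightarrow> real" where "Eg z = exp (- z\<^sup>2 / 4) / sqrt (4 * pi)"

fun gp :: "nat \<Rightarrow> real poly" where
  "gp 0 = 1"
| "gp (Suc k) = pderiv (gp k) + [:0, -1/2:] * gp k"

definition GG :: "nat \<Rightarrow> real \<Rightarrow> real" where "GG k z = poly (gp k) z * Eg z"

lemma Eg_deriv: "(Eg has_real_derivative (- (x / 2)) * Eg x) (at x)"
  unfolding Eg_def by (auto intro!: derivative_eq_intros simp: field_simps)

lemma dseq_GG: "dseq Eg GG"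
  unfolding dseq_def
proof safe
  show "GG 0 = Eg" by (simp add: GG_def fun_eq_iff)
  fix k x
  have "((\<lambda>z. poly (gp k) z * Eg z) has_real_derivative
      poly (pderiv (gp k)) x * Eg x + (- (x / 2)) * Eg x * poly (gp k) x) (at x)"
    by (rule DERIV_mult[OF poly_DERIV Eg_deriv])
  moreover have "poly (pderiv (gp k)) x * Eg x + (- (x / 2)) * Eg x * poly (gp k) x = GG (Suc k) x"
    by (simp add: GG_def algebra_simps)
  ultimately show "(GG k has_real_derivative GG (Suc k) x) (at x)"
    unfolding GG_def[abs_def] by simp
qed

lemma GG_bound: "\<exists>C. \<forall>z. \<bar>GG k z\<bar> \<le> C * exp (- z\<^sup>2 / 8)"
proof -
  obtain C where C: "\<And>z. \<bar>poly (gp k) z\<bar> * exp (- z\<^sup>2 / 8) \<le> C" using poly_gauss_bound by blast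
  have "\<bar>GG k z\<bar> \<le> C * exp (- z\<^sup>2 / 8)" for z
  proof -
    have ex: "exp (- z\<^sup>2 / 4) = exp (- z\<^sup>2 / 8) * exp (- z\<^sup>2 / 8)"
      by (subst exp_add[symmetric]) simp
    have s: "sqrt (4 * pi) \<ge> 1" using pi_gt3 by simp
    have "\<bar>GG k z\<bar> = \<bar>poly (gp k) z\<bar> * exp (- z\<^sup>2 / 8) * exp (- z\<^sup>2 / 8) / sqrt (4 * pi)"
      unfolding GG_def Eg_def ex by (simp add: abs_mult)
    also have "\<dots> \<le> \<bar>poly (gp k) z\<bar> * exp (- z\<^sup>2 / 8) * exp (- z\<^sup>2 / 8)"
      using divide_left_mono[of 1 "sqrt (4 * pi)" "\<bar>poly (gp k) z\<bar> * exp (- z\<^sup>2 / 8) * exp (- z\<^sup>2 / 8)"] s by simp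
    also have "\<dots> \<le> C * exp (- z\<^sup>2 / 8)" by (intro mult_right_mono C) auto
    finally show ?thesis .
  qed
  then show ?thesis by blast
qed

definition GB :: "nat \<Rightarrow> real" where "GB k = (SOME C. \<forall>z. \<bar>GG k z\<bar> \<le> C * exp (- z\<^sup>2 / 8))"

lemma GB: "\<bar>GG k z\<bar> \<le> GB k * exp (- z\<^sup>2 / 8)"
  using someI_ex[OF GG_bound[of k]] unfolding GB_def by blast

lemma GB_nonneg: "GB k \<ge> 0"
proof -
  have "\<bar>GG k 0\<bar> \<le> GB k" using GB[of k 0] by simp
  then show ?thesis by (rule order_trans[OF abs_ge_zero])
qed

definition hk :: "nat \<Rightarrow> real \<Rightarrow> real \<Rightarrow> real" where
  "hk k \<tau> y = (1 / sqrt \<tau>) ^ Suc k * GG k (y / sqrt \<tau>)"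

lemma heat_kernel_Eg: "\<tau> > 0 \<Longrightarrow> heat_kernel \<tau> y = (1 / sqrt \<tau>) * Eg ((1 / sqrt \<tau>) * y)"
  by (simp add: heat_kernel_def Eg_def real_sqrt_mult power_divide real_sqrt_pow2 field_simps)

lemma dseq_hk: assumes "\<tau> > 0" shows "dseq (heat_kernel \<tau>) (\<lambda>k. hk k \<tau>)"
proof -
  have "dseq (\<lambda>y. Eg ((1 / sqrt \<tau>) * y + 0)) (\<lambda>k y. (1 / sqrt \<tau>) ^ k * GG k ((1 / sqrt \<tau>) * y + 0))"
    by (rule dseq_affine[OF dseq_GG])
  from dseq_cmult[OF this, of "1 / sqrt \<tau>"]
  have d: "dseq (\<lambda>y. 1 / sqrt \<tau> * Eg ((1 / sqrt \<tau>) * y + 0))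
     (\<lambda>k y. 1 / sqrt \<tau> * ((1 / sqrt \<tau>) ^ k * GG k ((1 / sqrt \<tau>) * y + 0)))" .
  have e1: "heat_kernel \<tau> = (\<lambda>y. 1 / sqrt \<tau> * Eg ((1 / sqrt \<tau>) * y + 0))"
    using heat_kernel_Eg[OF assms] by (simp add: fun_eq_iff)
  have e2: "(\<lambda>k. hk k \<tau>) = (\<lambda>k y. 1 / sqrt \<tau> * ((1 / sqrt \<tau>) ^ k * GG k ((1 / sqrt \<tau>) * y + 0)))"
    by (simp add: fun_eq_iff hk_def)
  show ?thesis unfolding e1 e2 by (rule d)
qed

lemma deriv_heat_kernel: "\<tau> > 0 \<Longrightarrow> (deriv ^^ k) (heat_kernel \<tau>) = hk k \<tau>"
  using dseq_deriv[OF dseq_hk] by blast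

lemma hk_bound: assumes "\<tau> > 0"
  shows "\<bar>hk k \<tau> y\<bar> \<le> GB k * (1 / sqrt \<tau>) ^ Suc k * exp (- y\<^sup>2 / (8 * \<tau>))"
proof -
  have q: "(y / sqrt \<tau>)\<^sup>2 = y\<^sup>2 / \<tau>" using assms by (simp add: power_divide)
  have "\<bar>hk k \<tau> y\<bar> = (1 / sqrt \<tau>) ^ Suc k * \<bar>GG k (y / sqrt \<tau>)\<bar>"
    using assms by (simp add: hk_def abs_mult)
  also have "\<dots> \<le> (1 / sqrt \<tau>) ^ Suc k * (GB k * exp (- (y / sqrt \<tau>)\<^sup>2 / 8))"
    by (intro mult_left_mono GB) (use assms in auto)
  also have "\<dots> = GB k * (1 / sqrt \<tau>) ^ Suc k * exp (- y\<^sup>2 / (8 * \<tau>))"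
    unfolding q by (simp add: mult_ac)
  finally show ?thesis .
qed

lemma hk_cont: "continuous_on ({0<..} \<times> UNIV) (\<lambda>p. hk k (fst p) (snd p))"
proof -
  have c1: "continuous_on ({0<..} \<times> UNIV) (\<lambda>p::real\<times>real. snd p / sqrt (fst p))"
    by (intro continuous_intros) auto
  have c2: "continuous_on ({0<..} \<times> UNIV) (\<lambda>p::real\<times>real. GG k (snd p / sqrt (fst p)))"
    by (rule continuous_on_compose2[OF dseq_cont[OF dseq_GG] c1]) auto
  show ?thesis unfolding hk_def
    by (intro continuous_intros c2) auto
qed



lemma gp2: "gp 2 = [:-1/2, 0, 1/4:]"
  by (simp add: numeral_2_eq_2 pderiv_pCons)

lemma hk2_eq: assumes "\<tau> > 0"
  shows "hk 2 \<tau> y = heat_kernel \<tau> y * (y\<^sup>2 / (4 * \<tau>\<^sup>2) - 1 / (2 * \<tau>))"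
proof -
  define a where "a = sqrt \<tau>"
  have a: "a > 0" "\<tau> = a\<^sup>2" using assms by (auto simp: a_def)
  have s: "sqrt (4 * pi * a\<^sup>2) = sqrt (4 * pi) * a" using a by (simp add: real_sqrt_mult)
  have s2: "sqrt (a\<^sup>2) = a" using a by simp
  show ?thesis
    unfolding hk_def GG_def Eg_def gp2 heat_kernel_def a(2) s s2 using a(1)
    by (simp add: field_simps power2_eq_square power3_eq_cube)
qed

lemma heat_kernel_normal: "\<tau> > 0 \<Longrightarrow> heat_kernel \<tau> = normal_density 0 (sqrt (2 * \<tau>))"
proof -
  assume t: "\<tau> > 0"
  have "(sqrt (2 * \<tau>))\<^sup>2 = 2 * \<tau>" using t by simp
  then show ?thesis by (simp add: fun_eq_iff heat_kernel_def normal_density_def)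
qed

lemma heat_kernel_has_integral: "\<tau> > 0 \<Longrightarrow> (heat_kernel \<tau> has_integral 1) UNIV"
proof -
  assume t: "\<tau> > 0"
  have "(normal_density 0 (sqrt (2 * \<tau>)) has_integral 1) UNIV"
    using t has_integral_integral_lborel[OF integrable_normal_density, of "sqrt (2 * \<tau>)" 0]
      integral_normal_density[of "sqrt (2 * \<tau>)" 0] by simp
  then show ?thesis using heat_kernel_normal[OF t] by simp
qed



lemma heat_kernel_dt:
  assumes "\<tau> > 0"
  shows "((\<lambda>s. heat_kernel s y) has_real_derivative hk 2 \<tau> y) (at \<tau>)"
proof -
  have e: "heat_kernel s y = exp (- (y\<^sup>2) / (4 * s)) * inverse (sqrt s) / sqrt (4 * pi)" if "s > 0" for s
  proof -
    have r: "sqrt (4 * pi * s) = sqrt (4 * pi) * sqrt s" by (rule real_sqrt_mult)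
    show ?thesis unfolding heat_kernel_def r by (simp only: divide_inverse inverse_mult_distrib mult_ac)
  qed
  have sq: "sqrt \<tau> * sqrt \<tau> = \<tau>" using assms by simp
  have d1: "((\<lambda>s. exp (- (y\<^sup>2) / (4 * s))) has_real_derivative exp (- (y\<^sup>2) / (4 * \<tau>)) * (y\<^sup>2 / (4 * \<tau>\<^sup>2))) (at \<tau>)"
    using assms sq by (auto intro!: derivative_eq_intros simp: field_simps power2_eq_square)
  have d2: "((\<lambda>s. inverse (sqrt s)) has_real_derivative - inverse (sqrt \<tau>) / (2 * \<tau>)) (at \<tau>)"
    using assms sq by (auto intro!: derivative_eq_intros simp: field_simps power2_eq_square)
  have d: "((\<lambda>s. exp (- (y\<^sup>2) / (4 * s)) * inverse (sqrt s) / sqrt (4 * pi)) has_real_derivative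
       (exp (- (y\<^sup>2) / (4 * \<tau>)) * (y\<^sup>2 / (4 * \<tau>\<^sup>2)) * inverse (sqrt \<tau>) +
        (- inverse (sqrt \<tau>) / (2 * \<tau>)) * exp (- (y\<^sup>2) / (4 * \<tau>))) / sqrt (4 * pi)) (at \<tau>)"
    by (intro DERIV_cdivide DERIV_mult d1 d2)
  have eq: "(exp (- (y\<^sup>2) / (4 * \<tau>)) * (y\<^sup>2 / (4 * \<tau>\<^sup>2)) * inverse (sqrt \<tau>) +
        (- inverse (sqrt \<tau>) / (2 * \<tau>)) * exp (- (y\<^sup>2) / (4 * \<tau>))) / sqrt (4 * pi)
      = heat_kernel \<tau> y * (y\<^sup>2 / (4 * \<tau>\<^sup>2) - 1 / (2 * \<tau>))"
    unfolding e[OF assms] using assms by (simp add: field_simps)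
  have "((\<lambda>s. heat_kernel s y) has_real_derivative heat_kernel \<tau> y * (y\<^sup>2 / (4 * \<tau>\<^sup>2) - 1 / (2 * \<tau>))) (at \<tau>)"
    by (rule has_field_derivative_transform_within_open[OF d[unfolded eq], of "{0<..}"]) (use assms e in auto)
  then show ?thesis using hk2_eq[OF assms] by simp
qed


lemma heat_kernel_nonneg: "\<tau> > 0 \<Longrightarrow> heat_kernel \<tau> y \<ge> 0"
  by (simp add: heat_kernel_def)

lemma integral_affine_UNIV:
  fixes f :: "real \<Rightarrow> real"
  assumes f: "f absolutely_integrable_on UNIV" and m: "m \<noteq> 0"
  shows "(\<lambda>z. f (m * z + c)) absolutely_integrable_on UNIV \<and>
         integral UNIV (\<lambda>z. f (m * z + c)) = integral UNIV f / \<bar>m\<bar>"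
proof -
  let ?g = "\<lambda>z. m * z + c"
  have der: "(?g has_field_derivative m) (at x within UNIV)" for x by (auto intro!: derivative_eq_intros)
  have inj: "inj_on ?g UNIV" using m by (auto simp: inj_on_def)
  have img: "?g ` UNIV = UNIV"
  proof safe
    fix y :: real show "y \<in> ?g ` UNIV"
      by (rule image_eqI[where x = "(y - c) / m"]) (use m in auto)
  qed auto
  have *: "(\<lambda>x. \<bar>m\<bar> * f (?g x)) absolutely_integrable_on UNIV \<and> integral UNIV (\<lambda>x. \<bar>m\<bar> * f (?g x)) = integral UNIV f"
    using has_absolute_integral_change_of_variables_1'[OF _ der inj, of f "integral UNIV f"] f img by simp
  have e: "(\<lambda>z. f (m * z + c)) = (\<lambda>x. (1 / \<bar>m\<bar>) *\<^sub>R (\<bar>m\<bar> * f (?g x)))" using m by (simp add: fun_eq_iff)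
  have "(\<lambda>x. (1 / \<bar>m\<bar>) *\<^sub>R (\<bar>m\<bar> * f (?g x))) absolutely_integrable_on UNIV"
    using * by (intro absolutely_integrable_scaleR_left) auto
  moreover have "integral UNIV (\<lambda>x. (1 / \<bar>m\<bar>) *\<^sub>R (\<bar>m\<bar> * f (?g x))) = (1 / \<bar>m\<bar>) *\<^sub>R integral UNIV (\<lambda>x. \<bar>m\<bar> * f (?g x))"
    by (rule integral_cmul)
  moreover have "(1 / \<bar>m\<bar>) *\<^sub>R integral UNIV (\<lambda>x. \<bar>m\<bar> * f (?g x)) = integral UNIV f / \<bar>m\<bar>"
    using * by simp
  ultimately show ?thesis unfolding e by simp
qed

lemma heat_kernel_absint: "\<tau> > 0 \<Longrightarrow> heat_kernel \<tau> absolutely_integrable_on UNIV"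
  using heat_kernel_has_integral nonnegative_absolutely_integrable_1[of "heat_kernel \<tau>" UNIV] heat_kernel_nonneg by blast

lemma gauss_has_integral:
  assumes a: "a > 0"
  shows "((\<lambda>\<xi>. exp (- (c - \<xi>)\<^sup>2 / a)) has_integral sqrt (pi * a)) UNIV"
proof -
  have ha: "heat_kernel (a / 4) absolutely_integrable_on UNIV" using a by (intro heat_kernel_absint) simp
  have A: "(\<lambda>z. heat_kernel (a / 4) ((-1) * z + c)) absolutely_integrable_on UNIV \<and>
      integral UNIV (\<lambda>z. heat_kernel (a / 4) ((-1) * z + c)) = integral UNIV (heat_kernel (a / 4)) / \<bar>-1\<bar>"
    by (rule integral_affine_UNIV[OF ha]) simp
  have I1: "integral UNIV (heat_kernel (a / 4)) = 1"
    using heat_kernel_has_integral[of "a / 4"] a by (simp add: integral_unique)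
  have int: "(\<lambda>z. heat_kernel (a / 4) ((-1) * z + c)) integrable_on UNIV"
    using A absolutely_integrable_on_def by blast
  have "((\<lambda>z. heat_kernel (a / 4) ((-1) * z + c)) has_integral 1) UNIV"
    using integrable_integral[OF int] A I1 by simp
  then have "((\<lambda>z. sqrt (pi * a) * heat_kernel (a / 4) ((-1) * z + c)) has_integral sqrt (pi * a) * 1) UNIV"
    by (intro has_integral_mult_right)
  moreover have "sqrt (pi * a) * heat_kernel (a / 4) ((-1) * z + c) = exp (- (c - z)\<^sup>2 / a)" for z
  proof -
    have e1: "4 * (a / 4) = a" "4 * pi * (a / 4) = pi * a" by simp_all
    have e2: "((-1) * z + c)\<^sup>2 = (c - z)\<^sup>2" by (simp add: power2_eq_square algebra_simps)
    have p: "sqrt (pi * a) > 0" using a by simp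
    show ?thesis unfolding heat_kernel_def e1 e2 using p a by simp
  qed
  ultimately show ?thesis by simp
qed

lemma gauss_integrable: fixes a :: real assumes "a > 0" shows "(\<lambda>\<xi>. exp (- (c - \<xi>)\<^sup>2 / a)) integrable_on UNIV"
  using gauss_has_integral[OF assms, of c] by (rule has_integral_integrable)

lemma cont_measurable: assumes "continuous_on UNIV (f :: real \<Rightarrow> real)"
  shows "f \<in> borel_measurable (lebesgue_on UNIV)"
proof -
  have "f measurable_on UNIV" by (rule continuous_imp_measurable_on[OF assms])
  then show ?thesis using measurable_on_iff_borel_measurable[of UNIV f] by simp
qed

lemma GI:
  fixes F f :: "real \<Rightarrow> real"
  assumes Fc: "continuous_on UNIV F" and fc: "continuous_on UNIV f"
    and FM: "\<And>\<xi>. \<bar>F \<xi>\<bar> \<le> M" and fC: "\<And>\<xi>. \<bar>f \<xi>\<bar> \<le> C * exp (- (c - \<xi>)\<^sup>2 / a)"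
    and a: "a > 0"
  shows "(\<lambda>\<xi>. F \<xi> * f \<xi>) integrable_on UNIV"
    "\<bar>integral UNIV (\<lambda>\<xi>. F \<xi> * f \<xi>)\<bar> \<le> M * C * sqrt (pi * a)"
proof -
  have gi: "((\<lambda>\<xi>. M * C * exp (- (c - \<xi>)\<^sup>2 / a)) has_integral M * C * sqrt (pi * a)) UNIV"
    by (intro has_integral_mult_right gauss_has_integral a)
  have bd: "norm (F \<xi> * f \<xi>) \<le> M * C * exp (- (c - \<xi>)\<^sup>2 / a)" for \<xi>
  proof -
    have "M \<ge> 0" using FM[of 0] by linarith
    have "norm (F \<xi> * f \<xi>) = \<bar>F \<xi>\<bar> * \<bar>f \<xi>\<bar>" by (simp add: abs_mult)
    also have "\<dots> \<le> M * (C * exp (- (c - \<xi>)\<^sup>2 / a))"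
      by (intro mult_mono FM fC) (use \<open>M \<ge> 0\<close> in auto)
    finally show ?thesis by (simp add: mult.assoc)
  qed
  show int: "(\<lambda>\<xi>. F \<xi> * f \<xi>) integrable_on UNIV"
    by (rule measurable_bounded_by_integrable_imp_integrable[OF cont_measurable _ bd])
       (use gi Fc fc in \<open>auto intro: continuous_intros\<close>)
  have "norm (integral UNIV (\<lambda>\<xi>. F \<xi> * f \<xi>)) \<le> integral UNIV (\<lambda>\<xi>. M * C * exp (- (c - \<xi>)\<^sup>2 / a))"
    by (rule integral_norm_bound_integral[OF int]) (use gi bd in auto)
  also have "integral UNIV (\<lambda>\<xi>. M * C * exp (- (c - \<xi>)\<^sup>2 / a)) = M * C * sqrt (pi * a)"
    by (rule integral_unique[OF gi])
  finally show "\<bar>integral UNIV (\<lambda>\<xi>. F \<xi> * f \<xi>)\<bar> \<le> M * C * sqrt (pi * a)" by simp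
qed

lemma Bc_bounded:
  assumes "Bc F" shows "\<exists>B. \<forall>x. \<bar>F x\<bar> \<le> B"
proof -
  from assms obtain L where c: "continuous_on UNIV F" and l0: "(F \<longlongrightarrow> 0) at_bot" and lL: "(F \<longlongrightarrow> L) at_top"
    by (auto simp: Bc_def)
  have "eventually (\<lambda>x. dist (F x) 0 < 1) at_bot" using l0 by (rule tendstoD) simp
  then obtain a where a: "\<And>x. x \<le> a \<Longrightarrow> \<bar>F x\<bar> < 1" by (auto simp: eventually_at_bot_linorder)
  have "eventually (\<lambda>x. dist (F x) L < 1) at_top" using lL by (rule tendstoD) simp
  then obtain b where b: "\<And>x. x \<ge> b \<Longrightarrow> \<bar>F x - L\<bar> < 1" by (auto simp: eventually_at_top_linorder dist_real_def)
  have "compact (F ` {a..b})" by (intro compact_continuous_image continuous_on_subset[OF c]) auto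
  then obtain B where B: "\<forall>y\<in>F ` {a..b}. norm y \<le> B" using compact_imp_bounded bounded_iff by metis
  have "\<bar>F x\<bar> \<le> max B (max 1 (\<bar>L\<bar> + 1))" for x
  proof (cases "x \<le> a")
    case True then show ?thesis using a[of x] by simp
  next
    case False
    show ?thesis
    proof (cases "x \<ge> b")
      case True then show ?thesis using b[of x] by simp
    next
      case False
      then have "x \<in> {a..b}" using \<open>\<not> x \<le> a\<close> by auto
      then show ?thesis using B by force
    qed
  qed
  then show ?thesis by blast
qed

lemma Bc_le_norm:
  assumes "Bc F" shows "\<bar>F x\<bar> \<le> Acn_norm F"
proof -
  obtain B where B: "\<And>x. \<bar>F x\<bar> \<le> B" using Bc_bounded[OF assms] by blast
  have bdd: "bdd_above ((\<lambda>p. \<bar>F (fst p) - F (snd p)\<bar>) ` {p :: real \<times> real. fst p < snd p})"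
  proof (rule bdd_aboveI[of _ "2 * B"], clarsimp)
    fix a b :: real
    have "\<bar>F a - F b\<bar> \<le> \<bar>F a\<bar> + \<bar>F b\<bar>" by (rule abs_triangle_ineq4)
    also have "\<dots> \<le> B + B" by (intro add_mono B)
    finally show "\<bar>F a - F b\<bar> \<le> 2 * B" by simp
  qed
  have le: "\<bar>F y - F x\<bar> \<le> Acn_norm F" if "y < x" for y
  proof -
    have "(\<lambda>p. \<bar>F (fst p) - F (snd p)\<bar>) (y, x) \<le> (SUP p \<in> {p :: real \<times> real. fst p < snd p}. \<bar>F (fst p) - F (snd p)\<bar>)"
      by (rule cSUP_upper[OF _ bdd]) (use that in simp)
    then show ?thesis unfolding Acn_norm_def by simp
  qed
  have l0: "(F \<longlongrightarrow> 0) at_bot" using assms by (simp add: Bc_def)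
  have "((\<lambda>y. \<bar>F y - F x\<bar>) \<longlongrightarrow> \<bar>0 - F x\<bar>) at_bot"
    by (intro tendsto_intros l0)
  moreover have "eventually (\<lambda>y. \<bar>F y - F x\<bar> \<le> Acn_norm F) at_bot"
    unfolding eventually_at_bot_linorder by (rule exI[of _ "x - 1"]) (auto intro: le)
  ultimately have "\<bar>0 - F x\<bar> \<le> Acn_norm F"
    by (rule tendsto_upperbound) simp
  then show ?thesis by simp
qed

lemma Bc_diff: "Bc F \<Longrightarrow> Bc G \<Longrightarrow> Bc (\<lambda>x. F x - G x)"
  unfolding Bc_def by (auto intro!: continuous_intros tendsto_eq_intros)

lemma Bc_cont: "Bc F \<Longrightarrow> continuous_on UNIV F" by (simp add: Bc_def)


definition OM :: "real \<Rightarrow> real \<Rightarrow> nat \<Rightarrow> real \<Rightarrow> real" where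
  "OM c R k x = (if k = 0 then 1 else 0) - CC c R k x"

lemma dseq_OM: "dseq (\<lambda>x. 1 - cutoff c R x) (OM c R)"
proof -
  have "dseq (\<lambda>x. 1 - cutoff c R x) (\<lambda>k x. (if k = 0 then 1 else 0) - CC c R k x)"
    using dseq_diff[OF dseq_const[of 1] dseq_cut[of c R]] by simp
  then show ?thesis by (simp add: OM_def[abs_def])
qed

lemma OM_inner: "\<bar>x - c\<bar> \<le> R \<Longrightarrow> OM c R k x = 0"
  by (simp add: OM_def CC_inner)

lemma OM_outer: "\<bar>x - c\<bar> \<ge> R + 1 \<Longrightarrow> OM c R k x = (if k = 0 then 1 else 0)"
  by (simp add: OM_def CC_outer)

lemma CB_nonneg: "CB k \<ge> 0"
  using CC_bound[of 0 0 k 0] abs_ge_zero order_trans by blast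

lemma OM_bound: "\<bar>OM c R k x\<bar> \<le> 1 + CB k"
proof -
  have "\<bar>OM c R k x\<bar> \<le> \<bar>if k = 0 then 1 else 0 :: real\<bar> + \<bar>CC c R k x\<bar>"
    unfolding OM_def by (rule abs_triangle_ineq4)
  also have "\<dots> \<le> 1 + CB k" by (intro add_mono CC_bound) auto
  finally show ?thesis .
qed

lemma dseq_hk_refl:
  assumes "\<tau> > 0"
  shows "dseq (\<lambda>x. hk k \<tau> (c - x)) (\<lambda>j x. (-1) ^ j * hk (k + j) \<tau> (c - x))"
proof -
  have "dseq (hk k \<tau>) (\<lambda>j. hk (k + j) \<tau>)"
    using dseq_shift[OF dseq_hk[OF assms], of k] dseqD0[OF dseq_hk[OF assms]] by simp
  from dseq_affine[OF this, of "-1" c] show ?thesis by simp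
qed

lemma hk0: "\<tau> > 0 \<Longrightarrow> hk 0 \<tau> = heat_kernel \<tau>"
  using dseqD0[OF dseq_hk] by blast

definition WW :: "real \<Rightarrow> real \<Rightarrow> real \<Rightarrow> nat \<Rightarrow> nat \<Rightarrow> real \<Rightarrow> real" where
  "WW c R \<tau> k j x = (\<Sum>i = 0..j. real (j choose i) * OM c R i x * ((-1) ^ (j - i) * hk (k + (j - i)) \<tau> (c - x)))"

lemma dseq_WW:
  assumes "\<tau> > 0"
  shows "dseq (\<lambda>x. (1 - cutoff c R x) * hk k \<tau> (c - x)) (WW c R \<tau> k)"
  using dseq_mult[OF dseq_OM dseq_hk_refl[OF assms]] unfolding WW_def[abs_def] .

definition KW :: "nat \<Rightarrow> nat \<Rightarrow> real" where
  "KW k j = (\<Sum>i = 0..j. real (j choose i) * (1 + CB i) * GB (k + (j - i)))"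

lemma pow_sqrt_le:
  assumes "\<tau> > 0" "m \<le> N"
  shows "(1 / sqrt \<tau>) ^ Suc m \<le> (1 + 1 / \<tau>) ^ Suc N"
proof -
  have b: "1 / sqrt \<tau> \<le> 1 + 1 / \<tau>"
  proof (cases "\<tau> \<ge> 1")
    case True
    then have "1 / sqrt \<tau> \<le> 1" by simp
    then show ?thesis using assms(1) by (smt (verit) divide_pos_pos)
  next
    case False
    then have "sqrt \<tau> \<ge> \<tau>" using assms(1) by (simp add: real_le_rsqrt sqrt_ge_absD power2_eq_square mult_le_cancel_left1)
    then have "1 / sqrt \<tau> \<le> 1 / \<tau>" using assms(1) by (intro divide_left_mono) auto
    then show ?thesis by simp
  qed
  have "(1 / sqrt \<tau>) ^ Suc m \<le> (1 + 1 / \<tau>) ^ Suc m"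
    by (intro power_mono b) (use assms in auto)
  also have "\<dots> \<le> (1 + 1 / \<tau>) ^ Suc N"
    by (intro power_increasing) (use assms in auto)
  finally show ?thesis .
qed

lemma exp_split_le:
  fixes x c R \<tau> :: real
  assumes "\<tau> > 0" "\<bar>x - c\<bar> \<ge> R" "R \<ge> 0"
  shows "exp (- (c - x)\<^sup>2 / (8 * \<tau>)) \<le> exp (- R\<^sup>2 / (16 * \<tau>)) * exp (- (c - x)\<^sup>2 / (16 * \<tau>))"
proof -
  have "R \<le> \<bar>c - x\<bar>" using assms(2) abs_minus_commute[of x c] by linarith
  then have "R\<^sup>2 \<le> \<bar>c - x\<bar>\<^sup>2" by (intro power_mono) (use assms in auto)
  then have "R\<^sup>2 \<le> (c - x)\<^sup>2" by simp
  then have "- (c - x)\<^sup>2 / (8 * \<tau>) \<le> - R\<^sup>2 / (16 * \<tau>) + - (c - x)\<^sup>2 / (16 * \<tau>)"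
    using assms(1) by (simp add: field_simps)
  then show ?thesis by (simp add: exp_add[symmetric])
qed

lemma WW_bound:
  assumes "\<tau> > 0" "R \<ge> 0"
  shows "\<bar>WW c R \<tau> k j x\<bar> \<le> KW k j * (1 + 1 / \<tau>) ^ Suc (k + j) * exp (- R\<^sup>2 / (16 * \<tau>)) * exp (- (c - x)\<^sup>2 / (16 * \<tau>))"
proof (cases "\<bar>x - c\<bar> \<le> R")
  case True
  then have "WW c R \<tau> k j x = 0" by (simp add: WW_def OM_inner)
  moreover have "KW k j \<ge> 0" unfolding KW_def
    by (intro sum_nonneg mult_nonneg_nonneg GB_nonneg) (auto intro: add_nonneg_nonneg CB_nonneg)
  moreover have "(1 + 1 / \<tau>) ^ Suc (k + j) \<ge> 0" using assms by simp
  ultimately show ?thesis by simp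
next
  case False
  let ?E = "exp (- R\<^sup>2 / (16 * \<tau>)) * exp (- (c - x)\<^sup>2 / (16 * \<tau>))"
  let ?P = "(1 + 1 / \<tau>) ^ Suc (k + j)"
  have ex: "exp (- (c - x)\<^sup>2 / (8 * \<tau>)) \<le> ?E" using False assms by (intro exp_split_le) auto
  have "\<bar>WW c R \<tau> k j x\<bar> \<le> (\<Sum>i = 0..j. \<bar>real (j choose i) * OM c R i x * ((-1) ^ (j - i) * hk (k + (j - i)) \<tau> (c - x))\<bar>)"
    unfolding WW_def by (rule sum_abs)
  also have "\<dots> \<le> (\<Sum>i = 0..j. real (j choose i) * (1 + CB i) * GB (k + (j - i)) * (?P * ?E))"
  proof (intro sum_mono)
    fix i assume i: "i \<in> {0..j}"
    have h: "\<bar>hk (k + (j - i)) \<tau> (c - x)\<bar> \<le> GB (k + (j - i)) * (?P * ?E)"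
    proof -
      have "\<bar>hk (k + (j - i)) \<tau> (c - x)\<bar> \<le> GB (k + (j - i)) * (1 / sqrt \<tau>) ^ Suc (k + (j - i)) * exp (- (c - x)\<^sup>2 / (8 * \<tau>))"
        by (rule hk_bound[OF assms(1)])
      also have "\<dots> \<le> GB (k + (j - i)) * ?P * ?E"
        by (intro mult_mono pow_sqrt_le ex mult_nonneg_nonneg GB_nonneg) (use assms i in auto)
      finally show ?thesis by (simp add: mult.assoc)
    qed
    have "\<bar>real (j choose i) * OM c R i x * ((-1) ^ (j - i) * hk (k + (j - i)) \<tau> (c - x))\<bar>
        = real (j choose i) * \<bar>OM c R i x\<bar> * \<bar>hk (k + (j - i)) \<tau> (c - x)\<bar>"
      by (simp add: abs_mult power_abs)
    also have "\<dots> \<le> real (j choose i) * (1 + CB i) * (GB (k + (j - i)) * (?P * ?E))"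
      by (intro mult_mono OM_bound h mult_nonneg_nonneg) (auto intro: order_trans[OF abs_ge_zero OM_bound])
    finally show "\<bar>real (j choose i) * OM c R i x * ((-1) ^ (j - i) * hk (k + (j - i)) \<tau> (c - x))\<bar>
        \<le> real (j choose i) * (1 + CB i) * GB (k + (j - i)) * (?P * ?E)" by (simp add: mult.assoc)
  qed
  also have "\<dots> = KW k j * ?P * ?E"
    unfolding KW_def by (simp add: sum_distrib_right mult.assoc)
  finally show ?thesis by (simp add: mult.assoc)
qed

lemma WW_cont: "\<tau> > 0 \<Longrightarrow> continuous_on UNIV (WW c R \<tau> k j)"
  using dseq_cont[OF dseq_WW] by blast

lemma WI:
  fixes F :: "real \<Rightarrow> real"
  assumes Fc: "continuous_on UNIV F" and FM: "\<And>x. \<bar>F x\<bar> \<le> M" and t: "\<tau> > 0" and R: "R \<ge> 0"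
  shows "(\<lambda>x. F x * WW c R \<tau> k j x) integrable_on UNIV"
    "\<bar>integral UNIV (\<lambda>x. F x * WW c R \<tau> k j x)\<bar> \<le>
       M * (KW k j * (1 + 1 / \<tau>) ^ Suc (k + j) * exp (- R\<^sup>2 / (16 * \<tau>))) * sqrt (pi * (16 * \<tau>))"
proof -
  have b: "\<bar>WW c R \<tau> k j x\<bar> \<le> (KW k j * (1 + 1 / \<tau>) ^ Suc (k + j) * exp (- R\<^sup>2 / (16 * \<tau>))) * exp (- (c - x)\<^sup>2 / (16 * \<tau>))" for x
    using WW_bound[OF t R, of c k j x] by (simp add: mult.assoc)
  have a: "16 * \<tau> > 0" using t by simp
  show "(\<lambda>x. F x * WW c R \<tau> k j x) integrable_on UNIV"
    "\<bar>integral UNIV (\<lambda>x. F x * WW c R \<tau> k j x)\<bar> \<le>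
       M * (KW k j * (1 + 1 / \<tau>) ^ Suc (k + j) * exp (- R\<^sup>2 / (16 * \<tau>))) * sqrt (pi * (16 * \<tau>))"
    using GI[OF Fc WW_cont[OF t] FM b a] by auto
qed

definition phi :: "real \<Rightarrow> real \<Rightarrow> real \<Rightarrow> real \<Rightarrow> real" where
  "phi c R \<tau> x = cutoff c R x * heat_kernel \<tau> (c - x)"

lemma dseq_phi:
  assumes t: "\<tau> > 0"
  shows "dseq (phi c R \<tau>) (\<lambda>k x. (-1) ^ k * hk k \<tau> (c - x) - WW c R \<tau> 0 k x)"
proof -
  have "dseq (\<lambda>x. hk 0 \<tau> (c - x) - (1 - cutoff c R x) * hk 0 \<tau> (c - x))
     (\<lambda>k x. (-1) ^ k * hk (0 + k) \<tau> (c - x) - WW c R \<tau> 0 k x)"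
    by (rule dseq_diff[OF dseq_hk_refl[OF t] dseq_WW[OF t]])
  moreover have "(\<lambda>x. hk 0 \<tau> (c - x) - (1 - cutoff c R x) * hk 0 \<tau> (c - x)) = phi c R \<tau>"
    by (simp add: fun_eq_iff phi_def hk0[OF t] algebra_simps)
  ultimately show ?thesis by simp
qed

lemma cut_outer: "\<bar>x - c\<bar> \<ge> R + 1 \<Longrightarrow> cutoff c R x = 0"
  using CC_outer cut_eq by metis

lemma cut_inner: "\<bar>x - c\<bar> \<le> R \<Longrightarrow> cutoff c R x = 1"
  using CC_inner cut_eq by (metis)

lemma phi_supp: "x \<notin> {c - R - 1..c + R + 1} \<Longrightarrow> phi c R \<tau> x = 0"
  unfolding phi_def by (subst cut_outer) auto

lemma phi_test: "\<tau> > 0 \<Longrightarrow> test_fun (phi c R \<tau>)"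
  using dseq_test[OF dseq_phi phi_supp] by blast

definition psi :: "real \<Rightarrow> real \<Rightarrow> real \<Rightarrow> real \<Rightarrow> real" where
  "psi c R \<tau> x = (1 - cutoff c R x) * hk 2 \<tau> (c - x) - WW c R \<tau> 0 2 x"

lemma dseq_psi:
  assumes t: "\<tau> > 0"
  shows "dseq (psi c R \<tau>) (\<lambda>k x. WW c R \<tau> 2 k x - WW c R \<tau> 0 (k + 2) x)"
proof -
  have "dseq (WW c R \<tau> 0 2) (\<lambda>k. WW c R \<tau> 0 (2 + k))"
    using dseq_shift[OF dseq_WW[OF t]] by blast
  from dseq_diff[OF dseq_WW[OF t] this] show ?thesis
    unfolding psi_def[abs_def] by (simp add: add.commute)
qed

lemma psi_supp: "x \<notin> {c - R - 1..c + R + 1} \<Longrightarrow> psi c R \<tau> x = 0"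
proof -
  assume x: "x \<notin> {c - R - 1..c + R + 1}"
  then have o: "\<bar>x - c\<bar> \<ge> R + 1" by auto
  have "WW c R \<tau> 0 2 x = hk 2 \<tau> (c - x)"
    unfolding WW_def using o by (simp add: OM_outer numeral_2_eq_2)
  then show ?thesis unfolding psi_def using cut_outer[OF o] by simp
qed

lemma psi_test: "\<tau> > 0 \<Longrightarrow> test_fun (psi c R \<tau>)"
  using dseq_test[OF dseq_psi psi_supp] by blast


lemma mvt_bound:
  fixes g g' :: "real \<Rightarrow> real"
  assumes d: "\<And>y. min a b \<le> y \<Longrightarrow> y \<le> max a b \<Longrightarrow> (g has_real_derivative g' y) (at y)"
    and B: "\<And>y. min a b \<le> y \<Longrightarrow> y \<le> max a b \<Longrightarrow> \<bar>g' y\<bar> \<le> B"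
  shows "\<bar>g b - g a\<bar> \<le> B * \<bar>b - a\<bar>"
proof -
  have main: "\<bar>g q - g p\<bar> \<le> B * (q - p)" if pq: "p < q" and d': "\<And>y. p \<le> y \<Longrightarrow> y \<le> q \<Longrightarrow> (g has_real_derivative g' y) (at y)"
    and B': "\<And>y. p \<le> y \<Longrightarrow> y \<le> q \<Longrightarrow> \<bar>g' y\<bar> \<le> B" for p q
  proof -
    obtain z where z: "p < z" "z < q" "g q - g p = (q - p) * g' z"
      using MVT2[OF pq d'] by blast
    have "\<bar>g q - g p\<bar> = (q - p) * \<bar>g' z\<bar>" using z pq by (simp add: abs_mult)
    also have "\<dots> \<le> (q - p) * B" using B'[of z] z pq by (intro mult_left_mono) auto
    finally show ?thesis by (simp add: mult.commute)
  qed
  consider "a < b" | "a = b" | "b < a" by linarith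
  then show ?thesis
  proof cases
    case 1 then show ?thesis using main[of a b] d B by auto
  next
    case 2 then show ?thesis by simp
  next
    case 3 then show ?thesis using main[of b a] d B by (auto simp: abs_minus_commute)
  qed
qed

lemma compact_bound:
  fixes f :: "'a::topological_space \<Rightarrow> real"
  assumes "compact K" "continuous_on K f"
  shows "\<exists>B. \<forall>x\<in>K. \<bar>f x\<bar> \<le> B"
proof -
  have "compact (f ` K)" by (rule compact_continuous_image[OF assms(2,1)])
  then obtain B where "\<forall>y\<in>f ` K. norm y \<le> B" using compact_imp_bounded bounded_iff by metis
  then show ?thesis by auto
qed

locale heatsol =
  fixes n :: nat and u ux uxx ut :: "real \<Rightarrow> real \<Rightarrow> real" and P :: "real \<Rightarrow> real \<Rightarrow> real"
    and G :: "real \<Rightarrow> real" and M :: real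
  assumes n2: "n \<ge> 2"
    and ux: "\<And>x t. t > 0 \<Longrightarrow> ((\<lambda>y. u y t) has_real_derivative ux x t) (at x)"
    and uxx: "\<And>x t. t > 0 \<Longrightarrow> ((\<lambda>y. ux y t) has_real_derivative uxx x t) (at x)"
    and ut: "\<And>x t. t > 0 \<Longrightarrow> ((\<lambda>s. u x s) has_real_derivative ut x t) (at t)"
    and cont1: "continuous_on (UNIV \<times> {0<..}) (\<lambda>(x, t). ux x t)"
    and cont2: "continuous_on (UNIV \<times> {0<..}) (\<lambda>(x, t). uxx x t)"
    and cont3: "continuous_on (UNIV \<times> {0<..}) (\<lambda>(x, t). ut x t)"
    and heat: "\<And>x t. t > 0 \<Longrightarrow> ut x t - uxx x t = 0"
    and prim: "\<And>t. t > 0 \<Longrightarrow> Bc (P t) \<and> distr_deriv n (P t) (\<lambda>x. u x t)"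
    and Mb: "\<And>t. t > 0 \<Longrightarrow> Acn_norm (P t) \<le> M"
    and fG: "Bc G"
    and init: "((\<lambda>t. Acn_norm (\<lambda>x. P t x - G x)) \<longlongrightarrow> 0) (at_right 0)"
begin

lemma u_cont_x: assumes t: "t > 0" shows "continuous_on UNIV (\<lambda>x. u x t)"
proof -
  have "isCont (\<lambda>y. u y t) x" for x using DERIV_isCont[OF ux[OF t]] .
  then show ?thesis by (intro continuous_at_imp_continuous_on) auto
qed

lemma ux_cont_x: assumes t: "t > 0" shows "continuous_on UNIV (\<lambda>x. ux x t)"
proof -
  have "isCont (\<lambda>y. ux y t) x" for x using DERIV_isCont[OF uxx[OF t]] .
  then show ?thesis by (intro continuous_at_imp_continuous_on) auto
qed

lemma uxx_cont_x: "t > 0 \<Longrightarrow> continuous_on UNIV (\<lambda>x. uxx x t)"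
proof -
  assume t: "t > 0"
  have "continuous_on UNIV ((\<lambda>(x, t). uxx x t) \<circ> (\<lambda>x. (x, t)))"
    by (intro continuous_on_compose continuous_intros continuous_on_subset[OF cont2]) (use t in auto)
  then show ?thesis by (simp add: o_def)
qed

lemma u_cont': "continuous_on (UNIV \<times> {0<..}) (\<lambda>p. u (fst p) (snd p))"
  unfolding continuous_on_iff
proof (intro ballI allI impI)
  fix p :: "real \<times> real" and e :: real assume p: "p \<in> UNIV \<times> {0<..}" and e: "e > 0"
  obtain x t where pxt: "p = (x, t)" by (cases p)
  have t0: "t > 0" using p pxt by simp
  define K where "K = cbox (x - 1, t / 2) (x + 1, 2 * t)"
  have KS: "K \<subseteq> UNIV \<times> {0<..}" using t0 by (auto simp: K_def cbox_Pair_eq)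
  have cK: "compact K" unfolding K_def by (rule compact_cbox)
  obtain B1 where B1: "\<forall>p\<in>K. \<bar>(\<lambda>(x, t). ux x t) p\<bar> \<le> B1"
    using compact_bound[OF cK continuous_on_subset[OF cont1 KS]] by blast
  obtain B2 where B2: "\<forall>p\<in>K. \<bar>(\<lambda>(x, t). ut x t) p\<bar> \<le> B2"
    using compact_bound[OF cK continuous_on_subset[OF cont3 KS]] by blast
  have inK: "(y, s) \<in> K" if "\<bar>y - x\<bar> \<le> 1" "t / 2 \<le> s" "s \<le> 2 * t" for y s
    using that by (auto simp: K_def cbox_Pair_eq)
  have B1': "\<bar>ux y s\<bar> \<le> B1" if "\<bar>y - x\<bar> \<le> 1" "t / 2 \<le> s" "s \<le> 2 * t" for y s
    using B1 inK[OF that] by fastforce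
  have B2': "\<bar>ut y s\<bar> \<le> B2" if "\<bar>y - x\<bar> \<le> 1" "t / 2 \<le> s" "s \<le> 2 * t" for y s
    using B2 inK[OF that] by fastforce
  have "\<bar>ux x t\<bar> \<le> B1" using B1'[of x t] t0 by simp
  then have B10: "B1 \<ge> 0" by (rule order_trans[OF abs_ge_zero])
  have "\<bar>ut x t\<bar> \<le> B2" using B2'[of x t] t0 by simp
  then have B20: "B2 \<ge> 0" by (rule order_trans[OF abs_ge_zero])
  define d where "d = min (min 1 (t / 2)) (e / (B1 + B2 + 1))"
  have d0: "d > 0" using t0 e B10 B20 by (simp add: d_def)
  show "\<exists>d>0. \<forall>x'\<in>UNIV \<times> {0<..}. dist x' p < d \<longrightarrow>
      dist (u (fst x') (snd x')) (u (fst p) (snd p)) < e"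
  proof (intro exI[of _ d] conjI d0 ballI impI)
    fix q assume q: "q \<in> UNIV \<times> {0<..}" "dist q p < d"
    obtain y s where qys: "q = (y, s)" by (cases q)
    have dy: "\<bar>y - x\<bar> < d" using q(2) dist_fst_le[of q "(x, t)"] by (simp add: qys pxt dist_real_def)
    have ds: "\<bar>s - t\<bar> < d" using q(2) dist_snd_le[of q "(x, t)"] by (simp add: qys pxt dist_real_def)
    have dle: "d \<le> 1" "d \<le> t / 2" "d \<le> e / (B1 + B2 + 1)" unfolding d_def by linarith+
    have s_rng: "t / 2 \<le> s" "s \<le> 2 * t" using ds dle t0 by auto
    have A: "\<bar>u y s - u x s\<bar> \<le> B1 * \<bar>y - x\<bar>"
    proof (rule mvt_bound[where g' = "\<lambda>z. ux z s"])
      fix z show "((\<lambda>z. u z s) has_real_derivative ux z s) (at z)" using ux s_rng t0 by simp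
    next
      fix z assume "min x y \<le> z" "z \<le> max x y"
      then have "\<bar>z - x\<bar> \<le> 1" using dy dle by (auto simp: min_def max_def split: if_splits)
      then show "\<bar>ux z s\<bar> \<le> B1" using B1' s_rng by blast
    qed
    have Bt: "\<bar>u x s - u x t\<bar> \<le> B2 * \<bar>s - t\<bar>"
    proof (rule mvt_bound[where g' = "\<lambda>r. ut x r"])
      fix r assume r: "min t s \<le> r" "r \<le> max t s"
      then have "t / 2 \<le> r" using s_rng t0 by (auto simp: min_def max_def split: if_splits)
      then show "((\<lambda>r. u x r) has_real_derivative ut x r) (at r)" using ut t0 by simp
    next
      fix r assume r: "min t s \<le> r" "r \<le> max t s"
      then have "t / 2 \<le> r" "r \<le> 2 * t" using s_rng t0 by (auto simp: min_def max_def split: if_splits)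
      then show "\<bar>ut x r\<bar> \<le> B2" using B2' by simp
    qed
    have "\<bar>u y s - u x t\<bar> \<le> B1 * \<bar>y - x\<bar> + B2 * \<bar>s - t\<bar>" using A Bt by linarith
    also have "\<dots> \<le> B1 * d + B2 * d" using dy ds B10 B20 by (intro add_mono mult_left_mono) auto
    also have "\<dots> < (B1 + B2 + 1) * d" using d0 by (simp add: algebra_simps)
    also have "\<dots> \<le> e" using dle(3) B10 B20 by (simp add: field_simps)
    finally show "dist (u (fst q) (snd q)) (u (fst p) (snd p)) < e"
      by (simp add: qys pxt dist_real_def)
  qed
qed

lemma u_cont: "continuous_on (UNIV \<times> {0<..}) (\<lambda>(x, t). u x t)"
  using u_cont' by (simp add: case_prod_unfold)

lemma P_Bc: "t > 0 \<Longrightarrow> Bc (P t)" using prim by blast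
lemma P_cont: "t > 0 \<Longrightarrow> continuous_on UNIV (P t)" using P_Bc Bc_cont by blast
lemma P_bound: "t > 0 \<Longrightarrow> \<bar>P t x\<bar> \<le> M"
  using Bc_le_norm[OF P_Bc] Mb order_trans by blast
lemma PG_bound: "t > 0 \<Longrightarrow> \<bar>P t x - G x\<bar> \<le> Acn_norm (\<lambda>x. P t x - G x)"
  using Bc_le_norm[OF Bc_diff[OF P_Bc fG]] by blast

lemma distr:
  assumes "t > 0" "test_fun \<phi>"
  shows "integral UNIV (\<lambda>x. u x t * \<phi> x) = (-1) ^ n * integral UNIV (\<lambda>x. P t x * (deriv ^^ n) \<phi> x)"
  using prim[OF assms(1)] assms(2) unfolding distr_deriv_def by blast

end


lemma hkr_bound: "\<tau> > 0 \<Longrightarrow> \<bar>hk k \<tau> (c - x)\<bar> \<le> (GB k * (1 / sqrt \<tau>) ^ Suc k) * exp (- (c - x)\<^sup>2 / (8 * \<tau>))"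
  using hk_bound[of \<tau> k "c - x"] by (simp add: mult.assoc)

lemma hkr_cont: assumes "\<tau> > 0" shows "continuous_on UNIV (\<lambda>x. hk k \<tau> (c - x))"
proof -
  have "continuous_on UNIV ((\<lambda>j x. (-1) ^ j * hk (k + j) \<tau> (c - x)) 0)"
    by (rule dseq_cont[OF dseq_hk_refl[OF assms]])
  then show ?thesis by simp
qed

lemma int_F_hk:
  fixes F :: "real \<Rightarrow> real"
  assumes Fc: "continuous_on UNIV F" and FM: "\<And>x. \<bar>F x\<bar> \<le> B" and t: "\<tau> > 0"
  shows "(\<lambda>x. F x * hk k \<tau> (c - x)) integrable_on UNIV"
    "\<bar>integral UNIV (\<lambda>x. F x * hk k \<tau> (c - x))\<bar> \<le> B * (GB k * (1 / sqrt \<tau>) ^ Suc k) * sqrt (pi * (8 * \<tau>))"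
proof -
  have b: "\<And>x. \<bar>hk k \<tau> (c - x)\<bar> \<le> (GB k * (1 / sqrt \<tau>) ^ Suc k) * exp (- (c - x)\<^sup>2 / (8 * \<tau>))"
    by (rule hkr_bound[OF t])
  have a: "8 * \<tau> > 0" using t by simp
  show "(\<lambda>x. F x * hk k \<tau> (c - x)) integrable_on UNIV"
    "\<bar>integral UNIV (\<lambda>x. F x * hk k \<tau> (c - x))\<bar> \<le> B * (GB k * (1 / sqrt \<tau>) ^ Suc k) * sqrt (pi * (8 * \<tau>))"
    using GI[OF Fc hkr_cont[OF t] FM b a] by auto
qed

context heatsol
begin

definition Phi :: "real \<Rightarrow> real \<Rightarrow> real \<Rightarrow> real" where
  "Phi x0 t0 s = integral UNIV (\<lambda>\<xi>. P s \<xi> * hk n (t0 - s) (x0 - \<xi>))"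

definition IR :: "real \<Rightarrow> real \<Rightarrow> real \<Rightarrow> real \<Rightarrow> real" where
  "IR x0 t0 R s = integral UNIV (\<lambda>\<xi>. u \<xi> s * phi x0 R (t0 - s) \<xi>)"

lemma Phi_IR:
  assumes s: "0 < s" "s < t0" and R: "R \<ge> 0"
  shows "\<bar>Phi x0 t0 s - IR x0 t0 R s\<bar> \<le>
    M * (KW 0 n * (1 + 1 / (t0 - s)) ^ Suc (0 + n) * exp (- R\<^sup>2 / (16 * (t0 - s)))) * sqrt (pi * (16 * (t0 - s)))"
proof -
  define \<tau> where "\<tau> = t0 - s"
  have t: "\<tau> > 0" using s by (simp add: \<tau>_def)
  have test: "test_fun (phi x0 R \<tau>)" by (rule phi_test[OF t])
  have d: "(deriv ^^ n) (phi x0 R \<tau>) = (\<lambda>x. (-1) ^ n * hk n \<tau> (x0 - x) - WW x0 R \<tau> 0 n x)"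
    using dseq_deriv[OF dseq_phi[OF t]] by blast
  have i1: "(\<lambda>x. P s x * hk n \<tau> (x0 - x)) integrable_on UNIV"
    using int_F_hk(1)[OF P_cont[OF s(1)] P_bound[OF s(1)] t] by blast
  have i1': "(\<lambda>x. (-1) ^ n * (P s x * hk n \<tau> (x0 - x))) integrable_on UNIV"
    using integrable_on_mult_right[OF i1] by blast
  have i2: "(\<lambda>x. P s x * WW x0 R \<tau> 0 n x) integrable_on UNIV"
    using WI(1)[OF P_cont[OF s(1)] P_bound[OF s(1)] t R] by blast
  have J: "\<bar>integral UNIV (\<lambda>x. P s x * WW x0 R \<tau> 0 n x)\<bar> \<le>
       M * (KW 0 n * (1 + 1 / \<tau>) ^ Suc (0 + n) * exp (- R\<^sup>2 / (16 * \<tau>))) * sqrt (pi * (16 * \<tau>))"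
    using WI(2)[OF P_cont[OF s(1)] P_bound[OF s(1)] t R] by blast
  have "IR x0 t0 R s = (-1) ^ n * integral UNIV (\<lambda>x. P s x * (deriv ^^ n) (phi x0 R \<tau>) x)"
    unfolding IR_def \<tau>_def[symmetric] by (rule distr[OF s(1) test])
  also have "(\<lambda>x. P s x * (deriv ^^ n) (phi x0 R \<tau>) x) =
      (\<lambda>x. (-1) ^ n * (P s x * hk n \<tau> (x0 - x)) - P s x * WW x0 R \<tau> 0 n x)"
    unfolding d by (simp add: fun_eq_iff algebra_simps)
  also have "integral UNIV \<dots> = integral UNIV (\<lambda>x. (-1) ^ n * (P s x * hk n \<tau> (x0 - x))) -
       integral UNIV (\<lambda>x. P s x * WW x0 R \<tau> 0 n x)"
    by (rule integral_diff[OF i1' i2])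
  also have "integral UNIV (\<lambda>x. (-1) ^ n * (P s x * hk n \<tau> (x0 - x))) = (-1) ^ n * Phi x0 t0 s"
    unfolding Phi_def \<tau>_def[symmetric] by (rule integral_mult[OF i1, symmetric])
  finally have "IR x0 t0 R s = (-1) ^ n * ((-1) ^ n * Phi x0 t0 s - integral UNIV (\<lambda>x. P s x * WW x0 R \<tau> 0 n x))" .
  also have "\<dots> = Phi x0 t0 s - (-1) ^ n * integral UNIV (\<lambda>x. P s x * WW x0 R \<tau> 0 n x)"
    by (simp add: algebra_simps flip: power_mult_distrib)
  finally have "\<bar>Phi x0 t0 s - IR x0 t0 R s\<bar> = \<bar>integral UNIV (\<lambda>x. P s x * WW x0 R \<tau> 0 n x)\<bar>"
    by (simp add: abs_mult power_abs)
  with J show ?thesis unfolding \<tau>_def by simp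
qed

end


lemma dseq_zero_outside:
  assumes d: "dseq \<phi> \<Phi>" and S: "open S" "x \<in> S" and z: "\<And>y. y \<in> S \<Longrightarrow> \<phi> y = 0"
  shows "\<Phi> 1 x = 0"
proof -
  have "((\<lambda>y. 0) has_real_derivative 0) (at x)" by simp
  then have "(\<Phi> 0 has_real_derivative 0) (at x)"
    by (rule has_field_derivative_transform_within_open[OF _ S]) (use z dseqD0[OF d] in auto)
  moreover have "(\<Phi> 0 has_real_derivative \<Phi> (Suc 0) x) (at x)" by (rule dseqD[OF d])
  ultimately show ?thesis using DERIV_unique by fastforce
qed

lemma ibp2:
  fixes g gx gxx \<phi> :: "real \<Rightarrow> real" and \<Phi> :: "nat \<Rightarrow> real \<Rightarrow> real"
  assumes dg: "\<And>x. (g has_real_derivative gx x) (at x)"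
    and dgx: "\<And>x. (gx has_real_derivative gxx x) (at x)"
    and cgxx: "continuous_on UNIV gxx"
    and d: "dseq \<phi> \<Phi>" and supp: "\<And>x. x \<notin> {a + 1..b - 1} \<Longrightarrow> \<phi> x = 0" and ab: "a \<le> b"
  shows "integral {a..b} (\<lambda>x. gxx x * \<phi> x) = integral {a..b} (\<lambda>x. g x * \<Phi> 2 x)"
proof -
  define H where "H x = gx x * \<phi> x - g x * \<Phi> 1 x" for x
  have dH: "(H has_real_derivative (gxx x * \<phi> x - g x * \<Phi> 2 x)) (at x)" for x
  proof -
    have p: "(\<phi> has_real_derivative \<Phi> 1 x) (at x)" using dseqD[OF d, of 0 x] dseqD0[OF d] by simp
    have q: "(\<Phi> 1 has_real_derivative \<Phi> 2 x) (at x)" using dseqD[OF d, of 1 x] by (simp add: numeral_2_eq_2)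
    have "(H has_real_derivative (gxx x * \<phi> x + \<Phi> 1 x * gx x) - (gx x * \<Phi> 1 x + \<Phi> 2 x * g x)) (at x)"
      unfolding H_def[abs_def] by (intro DERIV_diff DERIV_mult dgx p dg q)
    then show ?thesis by (simp add: algebra_simps)
  qed
  have Ha: "H a = 0"
  proof -
    have "\<phi> a = 0" using supp by simp
    moreover have "\<Phi> 1 a = 0" by (rule dseq_zero_outside[OF d, of "{..<a+1}"]) (use supp in auto)
    ultimately show ?thesis by (simp add: H_def)
  qed
  have Hb: "H b = 0"
  proof -
    have "\<phi> b = 0" using supp by simp
    moreover have "\<Phi> 1 b = 0" by (rule dseq_zero_outside[OF d, of "{b-1<..}"]) (use supp in auto)
    ultimately show ?thesis by (simp add: H_def)
  qed
  have "((\<lambda>x. gxx x * \<phi> x - g x * \<Phi> 2 x) has_integral H b - H a) {a..b}"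
    by (rule fundamental_theorem_of_calculus[OF ab])
       (use dH in \<open>auto simp: has_real_derivative_iff_has_vector_derivative intro: has_vector_derivative_at_within\<close>)
  then have z: "integral {a..b} (\<lambda>x. gxx x * \<phi> x - g x * \<Phi> 2 x) = 0" using Ha Hb by (simp add: integral_unique)
  have cg: "continuous_on UNIV g" using dg by (intro continuous_at_imp_continuous_on) (auto intro: DERIV_isCont)
  have cphi: "continuous_on UNIV \<phi>" using dseq_cont[OF d, of UNIV 0] dseqD0[OF d] by simp
  have i1: "(\<lambda>x. gxx x * \<phi> x) integrable_on {a..b}"
    by (intro integrable_continuous_interval continuous_intros continuous_on_subset[OF cgxx]
        continuous_on_subset[OF cphi]) auto
  have i2: "(\<lambda>x. g x * \<Phi> 2 x) integrable_on {a..b}"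
    by (intro integrable_continuous_interval continuous_intros continuous_on_subset[OF cg]
        dseq_cont[OF d]) auto
  show ?thesis using z integral_diff[OF i1 i2] by simp
qed

lemma integral_UNIV_box:
  fixes f :: "real \<Rightarrow> real"
  assumes "\<And>x. x \<notin> S \<Longrightarrow> f x = 0"
  shows "integral UNIV f = integral S f"
proof -
  have "f = (\<lambda>x. if x \<in> S then f x else 0)" using assms by auto
  then have "integral UNIV f = integral UNIV (\<lambda>x. if x \<in> S then f x else 0)" by simp
  also have "\<dots> = integral S f" by (rule integral_restrict_UNIV)
  finally show ?thesis .
qed

lemma cont_hk_param:
  "continuous_on ({..<t0} \<times> UNIV) (\<lambda>p. hk k (t0 - fst p) (x0 - snd p))"
proof -
  have "continuous_on ({..<t0} \<times> UNIV) ((\<lambda>p. hk k (fst p) (snd p)) \<circ> (\<lambda>p. (t0 - fst p, x0 - snd p)))"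
    by (intro continuous_on_compose continuous_intros continuous_on_subset[OF hk_cont]) auto
  then show ?thesis by (simp add: o_def)
qed

lemma cut_cont: "continuous_on S (cutoff c R)"
  using dseq_cont[OF dseq_cut, of S c R 0] cut_eq by simp

context heatsol
begin

lemma ut_cont_param: "continuous_on (U \<times> V) (\<lambda>p. ut (snd p) (fst p))" if "U \<subseteq> {0<..}" for U V
proof -
  have "continuous_on (U \<times> V) ((\<lambda>(x, t). ut x t) \<circ> (\<lambda>p. (snd p, fst p)))"
    by (intro continuous_on_compose continuous_intros continuous_on_subset[OF cont3]) (use that in auto)
  then show ?thesis by (simp add: o_def)
qed

lemma u_cont_param: "continuous_on (U \<times> V) (\<lambda>p. u (snd p) (fst p))" if "U \<subseteq> {0<..}" for U V
proof -
  have "continuous_on (U \<times> V) ((\<lambda>(x, t). u x t) \<circ> (\<lambda>p. (snd p, fst p)))"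
    by (intro continuous_on_compose continuous_intros continuous_on_subset[OF u_cont]) (use that in auto)
  then show ?thesis by (simp add: o_def)
qed

lemma IR_deriv:
  assumes s: "0 < s" "s < t0" and R: "R \<ge> 0"
  shows "(IR x0 t0 R has_real_derivative integral UNIV (\<lambda>\<xi>. u \<xi> s * psi x0 R (t0 - s) \<xi>)) (at s)"
proof -
  define a where "a = x0 - R - 2"
  define b where "b = x0 + R + 2"
  define U where "U = {0<..<t0}"
  have ab: "a \<le> b" using R by (simp add: a_def b_def)
  have sU: "s \<in> U" using s by (simp add: U_def)
  define f where "f r \<xi> = u \<xi> r * phi x0 R (t0 - r) \<xi>" for r \<xi>
  define fx where "fx r \<xi> = ut \<xi> r * phi x0 R (t0 - r) \<xi> - u \<xi> r * (cutoff x0 R \<xi> * hk 2 (t0 - r) (x0 - \<xi>))" for r \<xi>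
  have supp: "phi x0 R \<tau> x = 0" if "x \<notin> {a + 1..b - 1}" for x \<tau>
  proof -
    have "x \<notin> {x0 - R - 1..x0 + R + 1}" using that by (auto simp: a_def b_def)
    then show ?thesis by (rule phi_supp)
  qed
  have IRbox: "IR x0 t0 R r = integral (cbox a b) (f r)" for r
    unfolding IR_def cbox_interval f_def
    by (rule integral_UNIV_box) (use supp in \<open>auto simp: a_def b_def\<close>)
  have fx: "((\<lambda>r. f r \<xi>) has_real_derivative fx r \<xi>) (at r within U)" if r: "r \<in> U" for r \<xi>
  proof -
    have rt: "t0 - r > 0" "r > 0" using r by (auto simp: U_def)
    have hd: "((\<lambda>r. heat_kernel (t0 - r) (x0 - \<xi>)) has_real_derivative hk 2 (t0 - r) (x0 - \<xi>) * (-1)) (at r)"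
      by (rule DERIV_chain2[where f = "\<lambda>\<tau>. heat_kernel \<tau> (x0 - \<xi>)" and g = "\<lambda>r. t0 - r",
            OF heat_kernel_dt[OF rt(1)]]) (auto intro!: derivative_eq_intros)
    have "((\<lambda>r. u \<xi> r * (cutoff x0 R \<xi> * heat_kernel (t0 - r) (x0 - \<xi>))) has_real_derivative
        ut \<xi> r * (cutoff x0 R \<xi> * heat_kernel (t0 - r) (x0 - \<xi>)) + (cutoff x0 R \<xi> * (hk 2 (t0 - r) (x0 - \<xi>) * (-1))) * u \<xi> r) (at r)"
      by (intro DERIV_mult ut rt DERIV_cmult hd)
    then have "((\<lambda>r. f r \<xi>) has_real_derivative fx r \<xi>) (at r)"
      unfolding f_def phi_def by (rule DERIV_cong) (simp add: fx_def phi_def algebra_simps)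
    then show ?thesis by (rule has_field_derivative_at_within)
  qed
  have fint: "f r integrable_on cbox a b" if "r \<in> U" for r
  proof -
    have rt: "t0 - r > 0" "r > 0" using that by (auto simp: U_def)
    have "continuous_on {a..b} (f r)"
      unfolding f_def phi_def hk0[OF rt(1), symmetric]
      by (intro continuous_intros continuous_on_subset[OF u_cont_x[OF rt(2)]] cut_cont
          continuous_on_subset[OF hkr_cont[OF rt(1)]]) auto
    then show ?thesis by (simp add: integrable_continuous_interval cbox_interval)
  qed
  have cfx: "continuous_on (U \<times> cbox a b) (\<lambda>(r, \<xi>). fx r \<xi>)"
  proof -
    have U0: "U \<subseteq> {0<..}" by (auto simp: U_def)
    have Ut: "U \<times> cbox a b \<subseteq> {..<t0} \<times> UNIV" by (auto simp: U_def)
    have e: "(\<lambda>(r, \<xi>). fx r \<xi>) = (\<lambda>p. ut (snd p) (fst p) * (cutoff x0 R (snd p) * heat_kernel (t0 - fst p) (x0 - snd p)) -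
        u (snd p) (fst p) * (cutoff x0 R (snd p) * hk 2 (t0 - fst p) (x0 - snd p)))"
      by (simp add: fun_eq_iff fx_def phi_def)
    have hk0e: "continuous_on (U \<times> cbox a b) (\<lambda>p. heat_kernel (t0 - fst p) (x0 - snd p))"
    proof (rule continuous_on_cong[THEN iffD1, OF refl _ continuous_on_subset[OF cont_hk_param[of t0 0 x0] Ut]])
      fix p assume "p \<in> U \<times> cbox a b"
      then have "t0 - fst p > 0" by (auto simp: U_def)
      then show "hk 0 (t0 - fst p) (x0 - snd p) = heat_kernel (t0 - fst p) (x0 - snd p)" by (simp add: hk0)
    qed
    have ccut: "continuous_on (U \<times> cbox a b) (\<lambda>p. cutoff x0 R (snd p))"
      by (intro continuous_on_compose2[OF cut_cont[of UNIV]] continuous_intros) auto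
    show ?thesis unfolding e
      by (intro continuous_intros ut_cont_param u_cont_param U0 ccut hk0e
          continuous_on_subset[OF cont_hk_param Ut])
  qed
  have L: "((\<lambda>r. integral (cbox a b) (f r)) has_real_derivative integral (cbox a b) (fx s)) (at s within U)"
    by (rule leibniz_rule_field_derivative[OF fx fint cfx sU]) (auto simp: U_def)
  have oU: "open U" by (simp add: U_def)
  have L': "(IR x0 t0 R has_real_derivative integral (cbox a b) (fx s)) (at s)"
    using L unfolding IRbox[symmetric] at_within_open[OF sU oU] by simp
  define \<tau> where "\<tau> = t0 - s"
  have t: "\<tau> > 0" using s by (simp add: \<tau>_def)
  have cphi: "continuous_on UNIV (phi x0 R \<tau>)"
    using dseq_cont[OF dseq_phi[OF t], of UNIV 0 x0 R] unfolding dseqD0[OF dseq_phi[OF t], of x0 R] .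
  have ci: "continuous_on {a..b} (\<lambda>\<xi>. h \<xi>)" if "continuous_on UNIV h" for h :: "real \<Rightarrow> real"
    using continuous_on_subset[OF that] by auto
  have i_ut: "(\<lambda>\<xi>. ut \<xi> s * phi x0 R \<tau> \<xi>) integrable_on {a..b}"
  proof -
    have c1: "continuous_on UNIV (\<lambda>\<xi>::real. (s, \<xi>))" by (intro continuous_intros)
    have "continuous_on UNIV ((\<lambda>p. ut (snd p) (fst p)) \<circ> (\<lambda>\<xi>. (s, \<xi>)))"
      by (rule continuous_on_compose[OF c1 continuous_on_subset[OF ut_cont_param[of "{s}" UNIV]]]) (use s in auto)
    then have "continuous_on UNIV (\<lambda>\<xi>. ut \<xi> s)" by (simp add: o_def)
    then show ?thesis by (intro integrable_continuous_interval continuous_intros ci cphi)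
  qed
  have i_u2: "(\<lambda>\<xi>. u \<xi> s * (cutoff x0 R \<xi> * hk 2 \<tau> (x0 - \<xi>))) integrable_on {a..b}"
    by (intro integrable_continuous_interval continuous_intros ci u_cont_x s cut_cont hkr_cont t)
  have "integral (cbox a b) (fx s) = integral {a..b} (\<lambda>\<xi>. ut \<xi> s * phi x0 R \<tau> \<xi>) -
      integral {a..b} (\<lambda>\<xi>. u \<xi> s * (cutoff x0 R \<xi> * hk 2 \<tau> (x0 - \<xi>)))"
    unfolding fx_def[abs_def] cbox_interval \<tau>_def[symmetric] by (rule integral_diff[OF i_ut i_u2])
  also have "integral {a..b} (\<lambda>\<xi>. ut \<xi> s * phi x0 R \<tau> \<xi>) = integral {a..b} (\<lambda>\<xi>. uxx \<xi> s * phi x0 R \<tau> \<xi>)"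
    using heat[OF s(1)] by (intro integral_cong) (simp add: algebra_simps)
  also have "\<dots> = integral {a..b} (\<lambda>\<xi>. u \<xi> s * ((-1) ^ 2 * hk 2 \<tau> (x0 - \<xi>) - WW x0 R \<tau> 0 2 \<xi>))"
    by (rule ibp2[OF ux[OF s(1)] uxx[OF s(1)] uxx_cont_x[OF s(1)] dseq_phi[OF t] supp ab])
  finally have "integral (cbox a b) (fx s) =
      integral {a..b} (\<lambda>\<xi>. u \<xi> s * ((-1) ^ 2 * hk 2 \<tau> (x0 - \<xi>) - WW x0 R \<tau> 0 2 \<xi>)) -
      integral {a..b} (\<lambda>\<xi>. u \<xi> s * (cutoff x0 R \<xi> * hk 2 \<tau> (x0 - \<xi>)))" .
  also have "\<dots> = integral {a..b} (\<lambda>\<xi>. u \<xi> s * psi x0 R \<tau> \<xi>)"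
  proof -
    have i3: "(\<lambda>\<xi>. u \<xi> s * ((-1) ^ 2 * hk 2 \<tau> (x0 - \<xi>) - WW x0 R \<tau> 0 2 \<xi>)) integrable_on {a..b}"
      by (intro integrable_continuous_interval continuous_intros ci u_cont_x s hkr_cont t WW_cont)
    show ?thesis
      using integral_diff[OF i3 i_u2, symmetric]
      by (simp add: psi_def algebra_simps)
  qed
  also have "\<dots> = integral UNIV (\<lambda>\<xi>. u \<xi> s * psi x0 R \<tau> \<xi>)"
    by (rule integral_UNIV_box[symmetric]) (use psi_supp in \<open>auto simp: a_def b_def\<close>)
  finally show ?thesis using L' by (simp add: \<tau>_def)
qed

end


lemma mono_bound:
  assumes a: "0 < \<alpha>" "\<alpha> \<le> \<tau>" "\<tau> \<le> \<beta>"
  shows "(1 + 1 / \<tau>) ^ N * exp (- R\<^sup>2 / (16 * \<tau>)) * sqrt (pi * (16 * \<tau>))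
      \<le> (1 + 1 / \<alpha>) ^ N * sqrt (pi * (16 * \<beta>)) * exp (- R\<^sup>2 / (16 * \<beta>))"
proof -
  have t: "\<tau> > 0" using a by simp
  have p: "(1 + 1 / \<tau>) ^ N \<le> (1 + 1 / \<alpha>) ^ N"
    by (intro power_mono add_left_mono divide_left_mono) (use a t in auto)
  have e: "exp (- R\<^sup>2 / (16 * \<tau>)) \<le> exp (- R\<^sup>2 / (16 * \<beta>))"
  proof -
    have "R\<^sup>2 / (16 * \<beta>) \<le> R\<^sup>2 / (16 * \<tau>)"
      by (intro divide_left_mono) (use a t in auto)
    then show ?thesis by simp
  qed
  have q: "sqrt (pi * (16 * \<tau>)) \<le> sqrt (pi * (16 * \<beta>))" using a by simp
  have "(1 + 1 / \<tau>) ^ N * exp (- R\<^sup>2 / (16 * \<tau>)) * sqrt (pi * (16 * \<tau>))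
      \<le> (1 + 1 / \<alpha>) ^ N * exp (- R\<^sup>2 / (16 * \<beta>)) * sqrt (pi * (16 * \<beta>))"
    by (intro mult_mono p e q mult_nonneg_nonneg) (use t a in auto)
  then show ?thesis by (simp add: mult_ac)
qed

lemma vanish:
  fixes d C \<beta> :: real
  assumes b: "\<beta> > 0" and le: "\<And>R. R \<ge> 0 \<Longrightarrow> \<bar>d\<bar> \<le> C * exp (- R\<^sup>2 / (16 * \<beta>))"
  shows "d = 0"
proof -
  have l: "((\<lambda>R::real. exp (- R\<^sup>2 / (16 * \<beta>))) \<longlongrightarrow> 0) at_top" using b by real_asymp
  have "((\<lambda>R::real. C * exp (- R\<^sup>2 / (16 * \<beta>))) \<longlongrightarrow> C * 0) at_top" by (intro tendsto_intros l)
  moreover have "eventually (\<lambda>R. \<bar>d\<bar> \<le> C * exp (- R\<^sup>2 / (16 * \<beta>))) at_top"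
    using eventually_ge_at_top[of 0] by eventually_elim (rule le)
  ultimately have "\<bar>d\<bar> \<le> C * 0"
    by (intro tendsto_le[OF _ _ tendsto_const]) auto
  then show ?thesis by simp
qed

context heatsol
begin

lemma M_nonneg: "M \<ge> 0"
  using P_bound[of 1 0] by (smt (verit) zero_less_one abs_ge_zero)

lemma IR_deriv_bound:
  assumes s: "0 < s" "s < t0" and R: "R \<ge> 0"
  shows "\<bar>integral UNIV (\<lambda>\<xi>. u \<xi> s * psi x0 R (t0 - s) \<xi>)\<bar> \<le>
    M * (KW 2 n * (1 + 1 / (t0 - s)) ^ Suc (2 + n) * exp (- R\<^sup>2 / (16 * (t0 - s)))) * sqrt (pi * (16 * (t0 - s))) +
    M * (KW 0 (n + 2) * (1 + 1 / (t0 - s)) ^ Suc (0 + (n + 2)) * exp (- R\<^sup>2 / (16 * (t0 - s)))) * sqrt (pi * (16 * (t0 - s)))"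
proof -
  define \<tau> where "\<tau> = t0 - s"
  have t: "\<tau> > 0" using s by (simp add: \<tau>_def)
  have d: "(deriv ^^ n) (psi x0 R \<tau>) = (\<lambda>x. WW x0 R \<tau> 2 n x - WW x0 R \<tau> 0 (n + 2) x)"
    using dseq_deriv[OF dseq_psi[OF t]] by blast
  have i1: "(\<lambda>x. P s x * WW x0 R \<tau> 2 n x) integrable_on UNIV"
    using WI(1)[OF P_cont[OF s(1)] P_bound[OF s(1)] t R] by blast
  have i2: "(\<lambda>x. P s x * WW x0 R \<tau> 0 (n + 2) x) integrable_on UNIV"
    using WI(1)[OF P_cont[OF s(1)] P_bound[OF s(1)] t R] by blast
  note b1 = WI(2)[OF P_cont[OF s(1)] P_bound[OF s(1)] t R, of x0 2 n]
  note b2 = WI(2)[OF P_cont[OF s(1)] P_bound[OF s(1)] t R, of x0 0 "n + 2"]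
  have "integral UNIV (\<lambda>\<xi>. u \<xi> s * psi x0 R \<tau> \<xi>) =
      (-1) ^ n * integral UNIV (\<lambda>x. P s x * (deriv ^^ n) (psi x0 R \<tau>) x)"
    by (rule distr[OF s(1) psi_test[OF t]])
  also have "(\<lambda>x. P s x * (deriv ^^ n) (psi x0 R \<tau>) x) = (\<lambda>x. P s x * WW x0 R \<tau> 2 n x - P s x * WW x0 R \<tau> 0 (n + 2) x)"
    unfolding d by (simp add: fun_eq_iff algebra_simps)
  also have "integral UNIV \<dots> = integral UNIV (\<lambda>x. P s x * WW x0 R \<tau> 2 n x) - integral UNIV (\<lambda>x. P s x * WW x0 R \<tau> 0 (n + 2) x)"
    by (rule integral_diff[OF i1 i2])
  finally have "\<bar>integral UNIV (\<lambda>\<xi>. u \<xi> s * psi x0 R \<tau> \<xi>)\<bar> =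
      \<bar>integral UNIV (\<lambda>x. P s x * WW x0 R \<tau> 2 n x) - integral UNIV (\<lambda>x. P s x * WW x0 R \<tau> 0 (n + 2) x)\<bar>"
    by (simp add: abs_mult power_abs)
  also have "\<dots> \<le> \<bar>integral UNIV (\<lambda>x. P s x * WW x0 R \<tau> 2 n x)\<bar> + \<bar>integral UNIV (\<lambda>x. P s x * WW x0 R \<tau> 0 (n + 2) x)\<bar>"
    by (rule abs_triangle_ineq4)
  finally show ?thesis using b1 b2 unfolding \<tau>_def by linarith
qed

lemma Phi_const:
  assumes s: "0 < s1" "s1 < s2" "s2 < t0"
  shows "Phi x0 t0 s1 = Phi x0 t0 s2"
proof -
  define \<alpha> where "\<alpha> = t0 - s2"
  define \<beta> where "\<beta> = t0 - s1"
  have ab: "0 < \<alpha>" "\<alpha> \<le> \<beta>" "0 < \<beta>" using s by (auto simp: \<alpha>_def \<beta>_def)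
  define Q where "Q = sqrt (pi * (16 * \<beta>))"
  define C1 where "C1 = M * KW 0 n * (1 + 1 / \<alpha>) ^ Suc (0 + n) * Q"
  define C2 where "C2 = M * KW 2 n * (1 + 1 / \<alpha>) ^ Suc (2 + n) * Q + M * KW 0 (n + 2) * (1 + 1 / \<alpha>) ^ Suc (0 + (n + 2)) * Q"
  have M0: "M \<ge> 0" by (rule M_nonneg)
  have KW0: "KW k j \<ge> 0" for k j
    unfolding KW_def by (intro sum_nonneg mult_nonneg_nonneg GB_nonneg add_nonneg_nonneg CB_nonneg) auto
  have rng: "\<alpha> \<le> t0 - s" "t0 - s \<le> \<beta>" if "s1 \<le> s" "s \<le> s2" for s
    using that by (auto simp: \<alpha>_def \<beta>_def)
  have E1: "\<bar>Phi x0 t0 s - IR x0 t0 R s\<bar> \<le> C1 * exp (- R\<^sup>2 / (16 * \<beta>))"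
    if "s1 \<le> s" "s \<le> s2" "R \<ge> 0" for s R
  proof -
    have "\<bar>Phi x0 t0 s - IR x0 t0 R s\<bar> \<le> M * KW 0 n * ((1 + 1 / (t0 - s)) ^ Suc (0 + n) * exp (- R\<^sup>2 / (16 * (t0 - s))) * sqrt (pi * (16 * (t0 - s))))"
      using Phi_IR[of s t0 R x0] that s by (simp add: mult_ac)
    also have "\<dots> \<le> M * KW 0 n * ((1 + 1 / \<alpha>) ^ Suc (0 + n) * sqrt (pi * (16 * \<beta>)) * exp (- R\<^sup>2 / (16 * \<beta>)))"
      by (intro mult_left_mono mono_bound rng that ab mult_nonneg_nonneg M0 KW0)
    finally show ?thesis by (simp add: C1_def Q_def mult_ac)
  qed
  have E2: "\<bar>IR x0 t0 R s2 - IR x0 t0 R s1\<bar> \<le> (C2 * exp (- R\<^sup>2 / (16 * \<beta>))) * \<bar>s2 - s1\<bar>" if R: "R \<ge> 0" for R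
  proof (rule mvt_bound[where g' = "\<lambda>s. integral UNIV (\<lambda>\<xi>. u \<xi> s * psi x0 R (t0 - s) \<xi>)"])
    fix y assume y: "min s1 s2 \<le> y" "y \<le> max s1 s2"
    then have y': "s1 \<le> y" "y \<le> s2" using s by auto
    show "(IR x0 t0 R has_real_derivative integral UNIV (\<lambda>\<xi>. u \<xi> y * psi x0 R (t0 - y) \<xi>)) (at y)"
      by (rule IR_deriv) (use y' s R in auto)
  next
    fix y assume y: "min s1 s2 \<le> y" "y \<le> max s1 s2"
    then have y': "s1 \<le> y" "y \<le> s2" using s by auto
    have "\<bar>integral UNIV (\<lambda>\<xi>. u \<xi> y * psi x0 R (t0 - y) \<xi>)\<bar> \<le>
      M * KW 2 n * ((1 + 1 / (t0 - y)) ^ Suc (2 + n) * exp (- R\<^sup>2 / (16 * (t0 - y))) * sqrt (pi * (16 * (t0 - y)))) +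
      M * KW 0 (n + 2) * ((1 + 1 / (t0 - y)) ^ Suc (0 + (n + 2)) * exp (- R\<^sup>2 / (16 * (t0 - y))) * sqrt (pi * (16 * (t0 - y))))"
      using IR_deriv_bound[of y t0 R x0] y' s R by (simp add: mult_ac)
    also have "\<dots> \<le> M * KW 2 n * ((1 + 1 / \<alpha>) ^ Suc (2 + n) * sqrt (pi * (16 * \<beta>)) * exp (- R\<^sup>2 / (16 * \<beta>))) +
      M * KW 0 (n + 2) * ((1 + 1 / \<alpha>) ^ Suc (0 + (n + 2)) * sqrt (pi * (16 * \<beta>)) * exp (- R\<^sup>2 / (16 * \<beta>)))"
      by (intro add_mono mult_left_mono mono_bound rng y' ab mult_nonneg_nonneg M0 KW0)
    also have "\<dots> = C2 * exp (- R\<^sup>2 / (16 * \<beta>))" by (simp add: C2_def Q_def algebra_simps)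
    finally show "\<bar>integral UNIV (\<lambda>\<xi>. u \<xi> y * psi x0 R (t0 - y) \<xi>)\<bar> \<le> C2 * exp (- R\<^sup>2 / (16 * \<beta>))" .
  qed
  show ?thesis
  proof -
    have "Phi x0 t0 s1 - Phi x0 t0 s2 = 0"
    proof (rule vanish[OF ab(3)])
      fix R :: real assume R: "R \<ge> 0"
      have "\<bar>Phi x0 t0 s1 - Phi x0 t0 s2\<bar> \<le> \<bar>Phi x0 t0 s1 - IR x0 t0 R s1\<bar> + \<bar>IR x0 t0 R s2 - IR x0 t0 R s1\<bar> + \<bar>Phi x0 t0 s2 - IR x0 t0 R s2\<bar>"
        by linarith
      also have "\<dots> \<le> C1 * exp (- R\<^sup>2 / (16 * \<beta>)) + (C2 * exp (- R\<^sup>2 / (16 * \<beta>))) * \<bar>s2 - s1\<bar> + C1 * exp (- R\<^sup>2 / (16 * \<beta>))"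
        by (intro add_mono E1 E2 R) (use s in auto)
      also have "\<dots> = (2 * C1 + C2 * \<bar>s2 - s1\<bar>) * exp (- R\<^sup>2 / (16 * \<beta>))" by (simp add: algebra_simps)
      finally show "\<bar>Phi x0 t0 s1 - Phi x0 t0 s2\<bar> \<le> (2 * C1 + C2 * \<bar>s2 - s1\<bar>) * exp (- R\<^sup>2 / (16 * \<beta>))" .
    qed
    then show ?thesis by simp
  qed
qed

end


lemma heat_kernel_refl_integrable:
  assumes t: "\<tau> > 0" shows "(\<lambda>\<xi>. heat_kernel \<tau> (c - \<xi>)) integrable_on UNIV"
proof -
  have e: "(\<lambda>\<xi>. heat_kernel \<tau> (c - \<xi>)) = (\<lambda>\<xi>. (1 / sqrt (4 * pi * \<tau>)) * exp (- (c - \<xi>)\<^sup>2 / (4 * \<tau>)))"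
    by (simp add: heat_kernel_def fun_eq_iff)
  show ?thesis unfolding e
    by (intro integrable_on_mult_right gauss_integrable) (use t in simp)
qed

lemma Eg_heat: "Eg = heat_kernel 1"
  using heat_kernel_Eg[of 1] by (simp add: fun_eq_iff)

lemma Eg_cont: "continuous_on UNIV Eg"
  using dseq_cont[OF dseq_GG, of UNIV 0] dseqD0[OF dseq_GG] by simp

lemma Eg_has_integral: "(Eg has_integral 1) UNIV"
  using heat_kernel_has_integral[of 1] by (simp add: Eg_heat)

lemma Eg_nonneg: "Eg z \<ge> 0" by (simp add: Eg_def)

context heatsol
begin

lemma IR1_lim:
  assumes t0: "t0 > 0"
  shows "((\<lambda>s. IR x0 t0 1 s) \<longlongrightarrow> u x0 t0) (at_left t0)"
proof -
  define v where "v \<xi> s = u \<xi> s * cutoff x0 1 \<xi>" for \<xi> s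
  have vc: "continuous_on (UNIV \<times> {0<..}) (\<lambda>p. v (fst p) (snd p))"
    unfolding v_def
    by (intro continuous_intros u_cont' continuous_on_compose2[OF cut_cont[of UNIV]]) auto
  have vcx: "continuous_on UNIV (\<lambda>\<xi>. v \<xi> s)" if "s > 0" for s
    unfolding v_def by (intro continuous_intros u_cont_x that cut_cont)
  define K where "K = cbox (x0 - 2, t0 / 2) (x0 + 2, t0)"
  have KS: "K \<subseteq> UNIV \<times> {0<..}" using t0 by (auto simp: K_def cbox_Pair_eq)
  obtain B0 where B0: "\<forall>p\<in>K. \<bar>v (fst p) (snd p)\<bar> \<le> B0"
    using compact_bound[OF _ continuous_on_subset[OF vc KS]] by (auto simp: K_def)
  define B where "B = max B0 0"
  have B: "\<bar>v \<xi> s\<bar> \<le> B" if "t0 / 2 \<le> s" "s \<le> t0" for \<xi> s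
  proof (cases "\<bar>\<xi> - x0\<bar> \<ge> 1 + 1")
    case True then have "v \<xi> s = 0" by (simp add: v_def cut_outer)
    then show ?thesis by (simp add: B_def)
  next
    case False then have "(\<xi>, s) \<in> K" using that by (auto simp: K_def cbox_Pair_eq)
    then show ?thesis using B0 by (force simp: B_def)
  qed
  have B_nn: "B \<ge> 0" by (simp add: B_def)
  have cv: "IR x0 t0 1 s = integral UNIV (\<lambda>z. v (x0 - sqrt (t0 - s) * z) s * Eg z)"
    if s: "t0 / 2 < s" "s < t0" for s
  proof -
    define \<tau> where "\<tau> = t0 - s"
    have t: "\<tau> > 0" using s by (simp add: \<tau>_def)
    define f where "f \<xi> = v \<xi> s * heat_kernel \<tau> (x0 - \<xi>)" for \<xi>
    have IRf: "IR x0 t0 1 s = integral UNIV f"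
      unfolding IR_def f_def v_def phi_def \<tau>_def by (simp add: mult_ac)
    have fc: "continuous_on UNIV f"
      unfolding f_def hk0[OF t, symmetric] using s t0
      by (intro continuous_intros vcx hkr_cont t) auto
    have fabs: "f absolutely_integrable_on UNIV"
    proof (rule measurable_bounded_by_integrable_imp_absolutely_integrable[OF cont_measurable[OF fc]])
      show "(\<lambda>\<xi>. B * heat_kernel \<tau> (x0 - \<xi>)) integrable_on UNIV"
        by (intro integrable_on_mult_right heat_kernel_refl_integrable t)
      fix \<xi> :: real
      have "\<bar>f \<xi>\<bar> = \<bar>v \<xi> s\<bar> * heat_kernel \<tau> (x0 - \<xi>)"
        using heat_kernel_nonneg[OF t] by (simp add: f_def abs_mult)
      also have "\<dots> \<le> B * heat_kernel \<tau> (x0 - \<xi>)"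
        by (intro mult_right_mono B heat_kernel_nonneg t) (use s in auto)
      finally show "norm (f \<xi>) \<le> B * heat_kernel \<tau> (x0 - \<xi>)" by simp
    qed auto
    have A: "integral UNIV (\<lambda>z. f ((- sqrt \<tau>) * z + x0)) = integral UNIV f / \<bar>- sqrt \<tau>\<bar>"
      using integral_affine_UNIV[OF fabs, of "- sqrt \<tau>" x0] t by simp
    have fe: "f ((- sqrt \<tau>) * z + x0) = (1 / sqrt \<tau>) *\<^sub>R (v (x0 - sqrt \<tau> * z) s * Eg z)" for z
      unfolding f_def heat_kernel_Eg[OF t] using t by (simp add: algebra_simps)
    have "integral UNIV (\<lambda>z. f ((- sqrt \<tau>) * z + x0)) = (1 / sqrt \<tau>) * integral UNIV (\<lambda>z. v (x0 - sqrt \<tau> * z) s * Eg z)"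
      unfolding fe integral_cmul by simp
    with A t have "integral UNIV (\<lambda>z. v (x0 - sqrt \<tau> * z) s * Eg z) = integral UNIV f"
      by (simp add: field_simps)
    then show ?thesis using IRf by (simp add: \<tau>_def)
  qed
  have half: "t0 / 2 < t0" using t0 by simp
  show ?thesis
  proof (rule tendsto_at_left_sequentially[OF half])
    fix S :: "nat \<Rightarrow> real"
    assume S: "\<And>k. S k < t0" "\<And>k. t0 / 2 < S k" "incseq S" "S \<longlonglongrightarrow> t0"
    define g where "g k z = v (x0 - sqrt (t0 - S k) * z) (S k) * Eg z" for k z
    have gi: "g k integrable_on UNIV" for k
    proof (rule measurable_bounded_by_integrable_imp_integrable[OF cont_measurable])
      have Sk: "S k > 0" using S(2)[of k] t0 by linarith
      show "continuous_on UNIV (g k)" unfolding g_def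
        by (intro continuous_intros Eg_cont continuous_on_compose2[OF vcx[OF Sk]]) auto
      show "(\<lambda>z. B * Eg z) integrable_on UNIV"
        using Eg_has_integral by (intro integrable_on_mult_right) blast
      fix z :: real
      show "norm (g k z) \<le> B * Eg z"
        unfolding g_def using B[of "S k"] S(1,2)[of k] Eg_nonneg[of z]
        by (simp add: abs_mult mult_right_mono less_imp_le)
    qed auto
    have lim: "(\<lambda>k. g k z) \<longlonglongrightarrow> v x0 t0 * Eg z" for z
    proof -
      have "(\<lambda>k. (x0 - sqrt (t0 - S k) * z, S k)) \<longlonglongrightarrow> (x0 - sqrt (t0 - t0) * z, t0)"
        by (intro tendsto_intros S(4))
      then have p: "(\<lambda>k. (x0 - sqrt (t0 - S k) * z, S k)) \<longlonglongrightarrow> (x0, t0)" by simp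
      have "(\<lambda>k. v (fst (x0 - sqrt (t0 - S k) * z, S k)) (snd (x0 - sqrt (t0 - S k) * z, S k))) \<longlonglongrightarrow> v (fst (x0, t0)) (snd (x0, t0))"
      proof (rule continuous_on_tendsto_compose[OF vc p])
        show "(x0, t0) \<in> UNIV \<times> {0<..}" using t0 by simp
        have "S k > 0" for k using S(2)[of k] t0 by linarith
        then show "\<forall>\<^sub>F k in sequentially. (x0 - sqrt (t0 - S k) * z, S k) \<in> UNIV \<times> {0<..}"
          by (intro always_eventually) simp
      qed
      then show ?thesis unfolding g_def by (intro tendsto_intros) simp
    qed
    have bnd: "norm (g k z) \<le> B * Eg z" for k z
      unfolding g_def using B[of "S k"] S(1,2)[of k] Eg_nonneg[of z]
      by (simp add: abs_mult mult_right_mono less_imp_le)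
    have DC: "(\<lambda>k. integral UNIV (g k)) \<longlonglongrightarrow> integral UNIV (\<lambda>z. v x0 t0 * Eg z)"
      by (rule dominated_convergence(2)[OF gi _ bnd lim])
         (use Eg_has_integral in \<open>auto intro: integrable_on_mult_right\<close>)
    have "integral UNIV (\<lambda>z. v x0 t0 * Eg z) = v x0 t0"
      using Eg_has_integral by (simp add: integral_unique integral_mult)
    also have "v x0 t0 = u x0 t0" by (simp add: v_def cut_inner)
    finally have DC': "(\<lambda>k. integral UNIV (g k)) \<longlonglongrightarrow> u x0 t0" using DC by simp
    have "IR x0 t0 1 (S k) = integral UNIV (g k)" for k
      unfolding g_def using cv[of "S k"] S(1,2)[of k] by simp
    then show "(\<lambda>k. IR x0 t0 1 (S k)) \<longlonglongrightarrow> u x0 t0" using DC' by simp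
  qed
qed

lemma Phi_lim_t0:
  assumes t0: "t0 > 0"
  shows "(Phi x0 t0 \<longlongrightarrow> u x0 t0) (at_left t0)"
proof -
  have T: "((\<lambda>s. M * (KW 0 n * (1 + 1 / (t0 - s)) ^ Suc (0 + n) * exp (- 1\<^sup>2 / (16 * (t0 - s)))) * sqrt (pi * (16 * (t0 - s)))) \<longlongrightarrow> 0) (at_left t0)"
    by real_asymp
  have ev: "eventually (\<lambda>s. norm (Phi x0 t0 s - IR x0 t0 1 s) \<le>
     M * (KW 0 n * (1 + 1 / (t0 - s)) ^ Suc (0 + n) * exp (- 1\<^sup>2 / (16 * (t0 - s)))) * sqrt (pi * (16 * (t0 - s)))) (at_left t0)"
    unfolding eventually_at_left_field
  proof (intro exI[of _ 0] conjI allI impI)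
    show "0 < t0" by (rule t0)
    fix y :: real assume y: "0 < y" "y < t0"
    show "norm (Phi x0 t0 y - IR x0 t0 1 y) \<le>
     M * (KW 0 n * (1 + 1 / (t0 - y)) ^ Suc (0 + n) * exp (- 1\<^sup>2 / (16 * (t0 - y)))) * sqrt (pi * (16 * (t0 - y)))"
      using Phi_IR[of y t0 1 x0] y by simp
  qed
  have "((\<lambda>s. Phi x0 t0 s - IR x0 t0 1 s) \<longlongrightarrow> 0) (at_left t0)"
    by (rule Lim_null_comparison[OF ev T])
  then have "((\<lambda>s. (Phi x0 t0 s - IR x0 t0 1 s) + IR x0 t0 1 s) \<longlongrightarrow> 0 + u x0 t0) (at_left t0)"
    by (intro tendsto_add IR1_lim t0)
  then show ?thesis by simp
qed

end


lemma heat_conv_eq: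
  assumes t: "t > 0" and n: "n \<ge> 1"
  shows "heat_conv n G t x = integral UNIV (\<lambda>\<xi>. G \<xi> * hk n t (x - \<xi>))"
proof -
  define g where "g = (\<lambda>\<xi>. (deriv ^^ (n - 1)) (heat_kernel t) (x - \<xi>))"
  have g: "g = (\<lambda>\<xi>. hk (n - 1) t (x - \<xi>))" by (simp add: g_def deriv_heat_kernel[OF t] fun_eq_iff)
  have lim: "(g \<longlongrightarrow> 0) at_top"
  proof (rule Lim_null_comparison)
    show "eventually (\<lambda>\<xi>. norm (g \<xi>) \<le> (GB (n - 1) * (1 / sqrt t) ^ Suc (n - 1)) * exp (- (x - \<xi>)\<^sup>2 / (8 * t))) at_top"
      unfolding g using hkr_bound[OF t] by simp
    have "((\<lambda>\<xi>::real. exp (- (x - \<xi>)\<^sup>2 / (8 * t))) \<longlongrightarrow> 0) at_top" using t by real_asymp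
    then show "((\<lambda>\<xi>. (GB (n - 1) * (1 / sqrt t) ^ Suc (n - 1)) * exp (- (x - \<xi>)\<^sup>2 / (8 * t))) \<longlongrightarrow> 0) at_top"
      by (intro tendsto_mult_right_zero)
  qed
  have L: "Lim at_top g = 0" by (rule tendsto_Lim[OF trivial_limit_at_top_linorder lim])
  have D: "deriv g \<xi> = - hk n t (x - \<xi>)" for \<xi>
  proof -
    have "(deriv ^^ 1) g = (\<lambda>\<xi>. (-1) ^ 1 * hk (n - 1 + 1) t (x - \<xi>))"
      unfolding g by (rule dseq_deriv[OF dseq_hk_refl[OF t]])
    then show ?thesis using n by (simp add: fun_eq_iff)
  qed
  have "heat_conv n G t x = Lim at_top G * Lim at_top g - integral UNIV (\<lambda>\<xi>. G \<xi> * deriv g \<xi>)"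
    unfolding heat_conv_def Let_def g_def ..
  also have "\<dots> = integral UNIV (\<lambda>\<xi>. G \<xi> * hk n t (x - \<xi>))"
    unfolding L D by simp
  finally show ?thesis .
qed

context heatsol
begin

lemma Jg_lim:
  assumes t0: "t0 > 0"
  shows "((\<lambda>s. integral UNIV (\<lambda>\<xi>. G \<xi> * hk n (t0 - s) (x0 - \<xi>))) \<longlongrightarrow>
          integral UNIV (\<lambda>\<xi>. G \<xi> * hk n t0 (x0 - \<xi>))) (at_right 0)"
proof -
  obtain BG where BG: "\<And>x. \<bar>G x\<bar> \<le> BG" using Bc_bounded[OF fG] by blast
  have BG0: "BG \<ge> 0" using BG[of 0] by linarith
  have Gc: "continuous_on UNIV G" by (rule Bc_cont[OF fG])
  have half: "0 < t0 / 2" using t0 by simp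
  define CC0 where "CC0 = BG * (GB n * (1 / sqrt (t0 / 2)) ^ Suc n)"
  show ?thesis
  proof (rule tendsto_at_right_sequentially[OF half])
    fix S :: "nat \<Rightarrow> real"
    assume S: "\<And>k. 0 < S k" "\<And>k. S k < t0 / 2" "decseq S" "S \<longlonglongrightarrow> 0"
    have tS: "t0 - S k > 0" "t0 / 2 \<le> t0 - S k" "t0 - S k \<le> t0" for k using S(1,2)[of k] by auto
    define f where "f k \<xi> = G \<xi> * hk n (t0 - S k) (x0 - \<xi>)" for k \<xi>
    have fi: "f k integrable_on UNIV" for k
      unfolding f_def by (rule int_F_hk(1)[OF Gc BG tS(1)])
    have hi: "(\<lambda>\<xi>. CC0 * exp (- (x0 - \<xi>)\<^sup>2 / (8 * t0))) integrable_on UNIV"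
      by (intro integrable_on_mult_right gauss_integrable) (use t0 in simp)
    have bnd: "norm (f k \<xi>) \<le> CC0 * exp (- (x0 - \<xi>)\<^sup>2 / (8 * t0))" for k \<xi>
    proof -
      have a: "(1 / sqrt (t0 - S k)) ^ Suc n \<le> (1 / sqrt (t0 / 2)) ^ Suc n"
        by (intro power_mono divide_left_mono) (use tS[of k] t0 in auto)
      have b: "exp (- (x0 - \<xi>)\<^sup>2 / (8 * (t0 - S k))) \<le> exp (- (x0 - \<xi>)\<^sup>2 / (8 * t0))"
      proof -
        have "(x0 - \<xi>)\<^sup>2 / (8 * t0) \<le> (x0 - \<xi>)\<^sup>2 / (8 * (t0 - S k))"
          by (intro divide_left_mono) (use tS[of k] t0 in auto)
        then show ?thesis by simp
      qed
      have "norm (f k \<xi>) = \<bar>G \<xi>\<bar> * \<bar>hk n (t0 - S k) (x0 - \<xi>)\<bar>" by (simp add: f_def abs_mult)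
      also have "\<dots> \<le> BG * ((GB n * (1 / sqrt (t0 - S k)) ^ Suc n) * exp (- (x0 - \<xi>)\<^sup>2 / (8 * (t0 - S k))))"
        by (intro mult_mono BG hkr_bound tS) (auto simp: BG0)
      also have "\<dots> \<le> BG * ((GB n * (1 / sqrt (t0 / 2)) ^ Suc n) * exp (- (x0 - \<xi>)\<^sup>2 / (8 * t0)))"
        by (intro mult_left_mono mult_mono a b BG0 GB_nonneg mult_nonneg_nonneg) (use t0 in auto)
      finally show ?thesis by (simp add: CC0_def mult_ac)
    qed
    have lim: "(\<lambda>k. f k \<xi>) \<longlonglongrightarrow> G \<xi> * hk n t0 (x0 - \<xi>)" for \<xi>
    proof -
      have p: "(\<lambda>k. (t0 - S k, x0 - \<xi>)) \<longlonglongrightarrow> (t0, x0 - \<xi>)"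
        using tendsto_Pair[OF tendsto_diff[OF tendsto_const S(4)] tendsto_const, of t0 "x0 - \<xi>"] by simp
      have "(\<lambda>k. hk n (fst (t0 - S k, x0 - \<xi>)) (snd (t0 - S k, x0 - \<xi>))) \<longlonglongrightarrow> hk n (fst (t0, x0 - \<xi>)) (snd (t0, x0 - \<xi>))"
      proof (rule continuous_on_tendsto_compose[OF hk_cont p])
        show "(t0, x0 - \<xi>) \<in> {0<..} \<times> UNIV" using t0 by simp
        show "\<forall>\<^sub>F k in sequentially. (t0 - S k, x0 - \<xi>) \<in> {0<..} \<times> UNIV"
          using tS(1) by (intro always_eventually) simp
      qed
      then show ?thesis unfolding f_def by (intro tendsto_intros) simp
    qed
    show "(\<lambda>k. integral UNIV (\<lambda>\<xi>. G \<xi> * hk n (t0 - S k) (x0 - \<xi>))) \<longlonglongrightarrow> integral UNIV (\<lambda>\<xi>. G \<xi> * hk n t0 (x0 - \<xi>))"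
      using dominated_convergence(2)[OF fi hi bnd lim] unfolding f_def .
  qed
qed

lemma Phi_lim0:
  assumes t0: "t0 > 0"
  shows "(Phi x0 t0 \<longlongrightarrow> integral UNIV (\<lambda>\<xi>. G \<xi> * hk n t0 (x0 - \<xi>))) (at_right 0)"
proof -
  have Gc: "continuous_on UNIV G" by (rule Bc_cont[OF fG])
  define E where "E s = Acn_norm (\<lambda>x. P s x - G x) * (GB n * (1 / sqrt (t0 - s)) ^ Suc n) * sqrt (pi * (8 * (t0 - s)))" for s
  have E: "(E \<longlongrightarrow> 0 * (GB n * (1 / sqrt (t0 - 0)) ^ Suc n) * sqrt (pi * (8 * (t0 - 0)))) (at_right 0)"
    unfolding E_def by (intro tendsto_intros init) (use t0 in auto)
  have ev: "eventually (\<lambda>s. norm (Phi x0 t0 s - integral UNIV (\<lambda>\<xi>. G \<xi> * hk n (t0 - s) (x0 - \<xi>))) \<le> E s) (at_right 0)"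
    unfolding eventually_at_right_field
  proof (intro exI[of _ t0] conjI allI impI)
    show "0 < t0" by (rule t0)
    fix s :: real assume s: "0 < s" "s < t0"
    have t: "t0 - s > 0" using s by simp
    have Fc: "continuous_on UNIV (\<lambda>x. P s x - G x)" by (intro continuous_intros P_cont s Gc)
    have i1: "(\<lambda>\<xi>. P s \<xi> * hk n (t0 - s) (x0 - \<xi>)) integrable_on UNIV"
      by (rule int_F_hk(1)[OF P_cont[OF s(1)] P_bound[OF s(1)] t])
    obtain BG where BG: "\<And>x. \<bar>G x\<bar> \<le> BG" using Bc_bounded[OF fG] by blast
    have i2: "(\<lambda>\<xi>. G \<xi> * hk n (t0 - s) (x0 - \<xi>)) integrable_on UNIV"
      by (rule int_F_hk(1)[OF Gc BG t])
    have "Phi x0 t0 s - integral UNIV (\<lambda>\<xi>. G \<xi> * hk n (t0 - s) (x0 - \<xi>)) =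
        integral UNIV (\<lambda>\<xi>. (P s \<xi> - G \<xi>) * hk n (t0 - s) (x0 - \<xi>))"
      unfolding Phi_def using integral_diff[OF i1 i2] by (simp add: algebra_simps)
    also have "\<bar>\<dots>\<bar> \<le> E s"
      unfolding E_def by (rule int_F_hk(2)[OF Fc PG_bound[OF s(1)] t])
    finally show "norm (Phi x0 t0 s - integral UNIV (\<lambda>\<xi>. G \<xi> * hk n (t0 - s) (x0 - \<xi>))) \<le> E s" by simp
  qed
  have "((\<lambda>s. Phi x0 t0 s - integral UNIV (\<lambda>\<xi>. G \<xi> * hk n (t0 - s) (x0 - \<xi>))) \<longlongrightarrow> 0) (at_right 0)"
    by (rule Lim_null_comparison[OF ev]) (use E in simp)
  then have "((\<lambda>s. (Phi x0 t0 s - integral UNIV (\<lambda>\<xi>. G \<xi> * hk n (t0 - s) (x0 - \<xi>))) +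
       integral UNIV (\<lambda>\<xi>. G \<xi> * hk n (t0 - s) (x0 - \<xi>))) \<longlongrightarrow> 0 + integral UNIV (\<lambda>\<xi>. G \<xi> * hk n t0 (x0 - \<xi>))) (at_right 0)"
    by (intro tendsto_add Jg_lim t0)
  then show ?thesis by simp
qed

lemma main:
  assumes t0: "t0 > 0"
  shows "u x0 t0 = heat_conv n G t0 x0"
proof -
  define c where "c = Phi x0 t0 (t0 / 2)"
  have const: "Phi x0 t0 s = c" if "0 < s" "s < t0" for s
  proof -
    consider "s < t0 / 2" | "s = t0 / 2" | "t0 / 2 < s" by linarith
    then show ?thesis
    proof cases
      case 1 then show ?thesis using Phi_const[of s "t0/2" t0 x0] that by (simp add: c_def)
    next
      case 2 show ?thesis unfolding c_def by (subst 2) (rule refl)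
    next
      case 3 then show ?thesis using Phi_const[of "t0/2" s t0 x0] that t0 by (simp add: c_def)
    qed
  qed
  have ev1: "eventually (\<lambda>s. Phi x0 t0 s = c) (at_left t0)"
    unfolding eventually_at_left_field using t0 const by (intro exI[of _ 0]) auto
  have ev2: "eventually (\<lambda>s. Phi x0 t0 s = c) (at_right 0)"
    unfolding eventually_at_right_field using t0 const by (intro exI[of _ t0]) auto
  have l1: "(Phi x0 t0 \<longlongrightarrow> c) (at_left t0)" using tendsto_eventually[OF ev1] by simp
  have l2: "(Phi x0 t0 \<longlongrightarrow> c) (at_right 0)" using tendsto_eventually[OF ev2] by simp
  have "u x0 t0 = c" using tendsto_unique[OF _ Phi_lim_t0[OF t0] l1] by simp
  moreover have "integral UNIV (\<lambda>\<xi>. G \<xi> * hk n t0 (x0 - \<xi>)) = c"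
    using tendsto_unique[OF _ Phi_lim0[OF t0] l2] by simp
  moreover have "heat_conv n G t0 x0 = integral UNIV (\<lambda>\<xi>. G \<xi> * hk n t0 (x0 - \<xi>))"
    by (rule heat_conv_eq[OF t0]) (use n2 in simp)
  ultimately show ?thesis by simp
qed

end

theorem theorem6p5:
  fixes n :: nat
    and u ux uxx ut :: "real \<Rightarrow> real \<Rightarrow> real"
    and P :: "real \<Rightarrow> real \<Rightarrow> real"
    and G :: "real \<Rightarrow> real"
  assumes n2: "n \<ge> 2"
    and ux: "\<And>x t. t > 0 \<Longrightarrow> ((\<lambda>y. u y t) has_real_derivative ux x t) (at x)"
    and uxx: "\<And>x t. t > 0 \<Longrightarrow> ((\<lambda>y. ux y t) has_real_derivative uxx x t) (at x)"
    and ut: "\<And>x t. t > 0 \<Longrightarrow> ((\<lambda>s. u x s) has_real_derivative ut x t) (at t)"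
    and cont: "continuous_on (UNIV \<times> {0<..}) (\<lambda>(x, t). ux x t)"
              "continuous_on (UNIV \<times> {0<..}) (\<lambda>(x, t). uxx x t)"
              "continuous_on (UNIV \<times> {0<..}) (\<lambda>(x, t). ut x t)"
    and heat: "\<And>x t. t > 0 \<Longrightarrow> ut x t - uxx x t = 0"
    and prim: "\<And>t. t > 0 \<Longrightarrow> Bc (P t) \<and> distr_deriv n (P t) (\<lambda>x. u x t)"
    and bdd: "\<exists>M. \<forall>t > 0. Acn_norm (P t) \<le> M"
    and f: "Bc G"
    and init: "((\<lambda>t. Acn_norm (\<lambda>x. P t x - G x)) \<longlongrightarrow> 0) (at_right 0)"
  shows "\<forall>x. \<forall>t > 0. u x t = heat_conv n G t x"
proof -
  obtain M where M: "\<And>t. t > 0 \<Longrightarrow> Acn_norm (P t) \<le> M" using bdd by blast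
  interpret heatsol n u ux uxx ut P G M
    using n2 ux uxx ut cont heat prim M f init by unfold_locales auto
  show ?thesis using main by blast
qed


end
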